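(* Suppose $C\in\mathcal{C}^3_{\rm c}$ satisfies $d_\infty(C,\psi(C))\neq0$. Then $C$ is a discontinuity point of the mapping $\psi:\mathcal{C}^3_{\rm c}\to\mathcal{C}^3_{\rm c}$ (with $d_\infty$ on both domain and codomain). In other words, every non-simplified $C\in\mathcal{C}^3_{\rm c}$ is a discontinuity point of $\psi$.
   Context: $\mathbb{I}=[0,1]$, $\lambda$ Lebesgue measure; $d_\infty(C_1,C_2)=\max_{\mathbf{x}\in\mathbb{I}^3}|C_1(\mathbf{x})-C_2(\mathbf{x})|$. Points of $\mathbb{I}^3$ are written $(\mathbf{u},v)$, $\mathbf{u}=(u_1,u_2)$. For a three-dimensional copula $C$, $K_C$ is (a version of) the regular conditional distribution of $(U_1,U_2)$ given $U_3=v$, $(U_1,U_2,U_3)\sim C$; $F_{1|3}(u_1|t)=K_C(t,[0,u_1]\times\mathbb{I})$, $F_{2|3}(u_2|t)=K_C(t,\mathbb{I}\times[0,u_2])$. $\mathcal{C}^3_{\rm c}$ is the set of three-dimensional copulas for which $F_{1|3}(\cdot|t)$ and $F_{2|3}(\cdot|t)$ are continuous for $\lambda$-a.e. $t$; for such $C$, for a.e. $t$ the conditional copula $C^t_{12;3}$ is the unique bivariate copula with $K_C(t,[\mathbf{0},\mathbf{u}])=C^t_{12;3}(F_{1|3}(u_1|t),F_{2|3}(u_2|t))$. $C\in\mathcal{C}^3_{\rm c}$ is simplified if there is a bivariate copula $A$ with $C(\mathbf{u},v)=\int_{[0,v]}A(F_{1|3}(u_1|t),F_{2|3}(u_2|t))\,d\lambda(t)$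 for all $(\mathbf{u},v)$. The partial copula is $C_p(\mathbf{s})=\int_{\mathbb{I}}C^t_{12;3}(\mathbf{s})\,d\lambda(t)$ and $\psi(C)(\mathbf{u},v)=\int_{[0,v]}C_p(F_{1|3}(u_1|t),F_{2|3}(u_2|t))\,d\lambda(t)$ (the partial vine copula of $C$). *)

theory Defs
  imports "HOL-Probability.Probability"
begin

definition copula2 :: "(real \<Rightarrow> real \<Rightarrow> real) \<Rightarrow> bool" where
  "copula2 A \<longleftrightarrow>
     (\<forall>u\<in>{0..1}. A 0 u = 0 \<and> A u 0 = 0 \<and> A u 1 = u \<and> A 1 u = u) \<and>
     (\<forall>a1\<in>{0..1}. \<forall>b1\<in>{0..1}. \<forall>a2\<in>{0..1}. \<forall>b2\<in>{0..1}.
        a1 \<le> b1 \<longrightarrow> a2 \<le> b2 \<longrightarrow> A b1 b2 - A a1 b2 - A b1 a2 + A a1 a2 \<ge> 0)"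

text \<open>Three-dimensional copula; arguments are (u1, u2, v).\<close>
definition copula3 :: "(real \<Rightarrow> real \<Rightarrow> real \<Rightarrow> real) \<Rightarrow> bool" where
  "copula3 C \<longleftrightarrow>
     (\<forall>x\<in>{0..1}. \<forall>y\<in>{0..1}. C 0 x y = 0 \<and> C x 0 y = 0 \<and> C x y 0 = 0) \<and>
     (\<forall>x\<in>{0..1}. C x 1 1 = x \<and> C 1 x 1 = x \<and> C 1 1 x = x) \<and>
     (\<forall>a1\<in>{0..1}. \<forall>b1\<in>{0..1}. \<forall>a2\<in>{0..1}. \<forall>b2\<in>{0..1}. \<forall>a3\<in>{0..1}. \<forall>b3\<in>{0..1}.
        a1 \<le> b1 \<longrightarrow> a2 \<le> b2 \<longrightarrow> a3 \<le> b3 \<longrightarrow>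
        C b1 b2 b3 - C a1 b2 b3 - C b1 a2 b3 - C b1 b2 a3
          + C a1 a2 b3 + C a1 b2 a3 + C b1 a2 a3 - C a1 a2 a3 \<ge> 0)"

text \<open>K is (a version of) the regular conditional distribution of (U1,U2) given U3 = t,
  where (U1,U2,U3) ~ C: a Markov kernel from I to the Borel sets of I^2 with
  C(u1,u2,v) = integral over [0,v] of K(t,[0,u1] x [0,u2]).\<close>
definition cond_kernel :: "(real \<Rightarrow> real \<Rightarrow> real \<Rightarrow> real) \<Rightarrow> (real \<Rightarrow> (real \<times> real) measure) \<Rightarrow> bool" where
  "cond_kernel C K \<longleftrightarrow>
     (\<forall>t. prob_space (K t) \<and> sets (K t) = sets (borel :: (real \<times> real) measure) \<and>
          emeasure (K t) ({0..1} \<times> {0..1}) = 1) \<and>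
     (\<forall>A \<in> sets (borel :: (real \<times> real) measure). (\<lambda>t. measure (K t) A) \<in> borel_measurable lborel) \<and>
     (\<forall>u1\<in>{0..1}. \<forall>u2\<in>{0..1}. \<forall>v\<in>{0..1}.
        C u1 u2 v = (LINT t:{0..v}|lborel. measure (K t) ({0..u1} \<times> {0..u2})))"

definition F13 :: "(real \<Rightarrow> (real \<times> real) measure) \<Rightarrow> real \<Rightarrow> real \<Rightarrow> real" where
  "F13 K u1 t = measure (K t) ({0..u1} \<times> {0..1})"

definition F23 :: "(real \<Rightarrow> (real \<times> real) measure) \<Rightarrow> real \<Rightarrow> real \<Rightarrow> real" where
  "F23 K u2 t = measure (K t) ({0..1} \<times> {0..u2})"

definition C3c :: "(real \<Rightarrow> real \<Rightarrow> real \<Rightarrow> real) set" where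
  "C3c = {C. copula3 C \<and> (\<exists>K. cond_kernel C K \<and>
            (AE t in lborel. t \<in> {0..1} \<longrightarrow>
               continuous_on UNIV (\<lambda>x. F13 K x t) \<and> continuous_on UNIV (\<lambda>x. F23 K x t)))}"

text \<open>Conditional copula C^t_{12;3} (unique for a.e. t when C is in C3c).\<close>
definition cond_copula :: "(real \<Rightarrow> (real \<times> real) measure) \<Rightarrow> real \<Rightarrow> real \<Rightarrow> real \<Rightarrow> real" where
  "cond_copula K t = (SOME A. copula2 A \<and>
     (\<forall>u1\<in>{0..1}. \<forall>u2\<in>{0..1}.
        measure (K t) ({0..u1} \<times> {0..u2}) = A (F13 K u1 t) (F23 K u2 t)))"

definition partial_copula :: "(real \<Rightarrow> (real \<times> real) measure) \<Rightarrow> real \<Rightarrow> real \<Rightarrow> real" where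
  "partial_copula K s1 s2 = (LINT t:{0..1}|lebesgue. cond_copula K t s1 s2)"

definition psi :: "(real \<Rightarrow> real \<Rightarrow> real \<Rightarrow> real) \<Rightarrow> (real \<Rightarrow> real \<Rightarrow> real \<Rightarrow> real)" where
  "psi C u1 u2 v = (let K = (SOME K. cond_kernel C K) in
     LINT t:{0..v}|lebesgue. partial_copula K (F13 K u1 t) (F23 K u2 t))"

definition dinf :: "(real \<Rightarrow> real \<Rightarrow> real \<Rightarrow> real) \<Rightarrow> (real \<Rightarrow> real \<Rightarrow> real \<Rightarrow> real) \<Rightarrow> real" where
  "dinf C1 C2 = (SUP x\<in>{0..1} \<times> {0..1} \<times> {0..1}.
     \<bar>C1 (fst x) (fst (snd x)) (snd (snd x)) - C2 (fst x) (fst (snd x)) (snd (snd x))\<bar>)"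

end

theory Submission
  imports Defs
begin

lemma rect_sets[measurable]: "{0..a} \<times> {0..b::real} \<in> sets (borel :: (real\<times>real) measure)"
  by (auto intro!: borel_closed closed_Times)

lemma rect2_incr:
  fixes M :: "(real\<times>real) measure"
  assumes fm: "finite_measure M" and s: "sets M = sets borel" and "a1 \<le> b1" "a2 \<le> b2"
  shows "measure M ({0..b1}\<times>{0..b2}) - measure M ({0..a1}\<times>{0..b2}) - measure M ({0..b1}\<times>{0..a2}) + measure M ({0..a1}\<times>{0..a2}) \<ge> 0"
proof -
  interpret finite_measure M by fact
  have m: "\<And>a b. {0..a} \<times> {0..b::real} \<in> sets M" using s by simp
  have f: "\<And>a b. {0..a} \<times> {0..b::real} \<in> fmeasurable M" using m emeasure_finite by (simp add: fmeasurable_def less_top[symmetric])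
  have "measure M ({0..a1}\<times>{0..b2} \<union> {0..b1}\<times>{0..a2}) = measure M ({0..a1}\<times>{0..b2}) + measure M ({0..b1}\<times>{0..a2}) - measure M ({0..a1}\<times>{0..b2} \<inter> {0..b1}\<times>{0..a2})"
    using f by (intro measure_Un3) auto
  moreover have "{0..a1}\<times>{0..b2} \<inter> {0..b1}\<times>{0..a2} = {0..a1}\<times>{0..a2}" using assms by auto
  moreover have "measure M ({0..a1}\<times>{0..b2} \<union> {0..b1}\<times>{0..a2}) \<le> measure M ({0..b1}\<times>{0..b2})"
    using assms m by (intro finite_measure_mono) auto
  ultimately show ?thesis by (smt (verit))
qed

lemma ck_prob: "cond_kernel C K \<Longrightarrow> prob_space (K t)" by (simp add: cond_kernel_def)
lemma ck_sets: "cond_kernel C K \<Longrightarrow> sets (K t) = sets borel" by (simp add: cond_kernel_def)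
lemma ck_sq: "cond_kernel C K \<Longrightarrow> emeasure (K t) ({0..1}\<times>{0..1}) = 1" by (simp add: cond_kernel_def)
lemma ck_meas: "cond_kernel C K \<Longrightarrow> A \<in> sets borel \<Longrightarrow> (\<lambda>t. measure (K t) A) \<in> borel_measurable lborel"
  by (simp add: cond_kernel_def)
lemma ck_meas_rect[measurable]: "cond_kernel C K \<Longrightarrow> (\<lambda>t. measure (K t) ({0..a}\<times>{0..b})) \<in> borel_measurable lborel"
  by (simp add: cond_kernel_def)
lemma ck_val: "cond_kernel C K \<Longrightarrow> u1\<in>{0..1} \<Longrightarrow> u2\<in>{0..1} \<Longrightarrow> v\<in>{0..1} \<Longrightarrow>
   C u1 u2 v = (LINT t:{0..v}|lborel. measure (K t) ({0..u1} \<times> {0..u2}))"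
  by (simp add: cond_kernel_def)
lemma ck_bnd: "cond_kernel C K \<Longrightarrow> 0 \<le> measure (K t) A \<and> measure (K t) A \<le> 1"
  using prob_space.prob_le_1[OF ck_prob] measure_nonneg by metis

lemma ck_integrable:
  assumes "cond_kernel C K"
  shows "integrable lborel (\<lambda>t. indicator {a..b} t * measure (K t) ({0..u1}\<times>{0..u2}))"
proof -
  have "integrable lborel (\<lambda>t. indicator {a..b} t *\<^sub>R measure (K t) ({0..u1}\<times>{0..u2}))"
    using assms ck_bnd[OF assms]
    by (intro integrableI_bounded_set_indicator[where B=1]) (auto simp: ck_meas_rect emeasure_lborel_Icc_eq)
  then show ?thesis by simp
qed

lemma kernel_ae_rect:
  assumes K1: "cond_kernel C K1" and K2: "cond_kernel C K2" and u: "u1\<in>{0..1}" "u2\<in>{0..1}"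
  shows "AE t in lborel. t \<in> {0..1} \<longrightarrow> measure (K1 t) ({0..u1}\<times>{0..u2}) = measure (K2 t) ({0..u1}\<times>{0..u2})"
proof -
  define f1 where "f1 t = indicator {0..1} t * measure (K1 t) ({0..u1}\<times>{0..u2})" for t
  define f2 where "f2 t = indicator {0..1} t * measure (K2 t) ({0..u1}\<times>{0..u2})" for t
  have f1m[measurable]: "f1 \<in> borel_measurable lborel" unfolding f1_def using K1 by measurable
  have f2m[measurable]: "f2 \<in> borel_measurable lborel" unfolding f2_def using K2 by measurable
  have f1p: "f1 t \<ge> 0" for t unfolding f1_def using ck_bnd[OF K1] by (simp add: indicator_def)
  have f2p: "f2 t \<ge> 0" for t unfolding f2_def using ck_bnd[OF K2] by (simp add: indicator_def)
  have key: "integral\<^sup>L lborel (\<lambda>t. f t * indicator {x<..} t) = C u1 u2 1 - (if x < 0 then 0 else C u1 u2 (min x 1))"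
    if K: "cond_kernel C K" and fd: "\<And>t. f t = indicator {0..1} t * measure (K t) ({0..u1}\<times>{0..u2})" for K f x
  proof -
    have i1: "integrable lborel f" unfolding fd[abs_def] using ck_integrable[OF K] .
    have fe: "f = (\<lambda>t. indicator {0..1} t * measure (K t) ({0..u1}\<times>{0..u2}))" using fd by (simp add: fun_eq_iff)
    have e1: "integral\<^sup>L lborel f = C u1 u2 1" using ck_val[OF K u, of 1] by (simp add: fe set_lebesgue_integral_def)
    have "integral\<^sup>L lborel (\<lambda>t. f t * indicator {..x} t) = (if x < 0 then 0 else C u1 u2 (min x 1))"
    proof (cases "x < 0")
      case True
      then have "(\<lambda>t. f t * indicator {..x} t) = (\<lambda>t. 0)" by (auto simp: fd indicator_def fun_eq_iff)
      then show ?thesis using True by simp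
    next
      case False
      then have "(\<lambda>t. f t * indicator {..x} t) = (\<lambda>t. indicator {0..min x 1} t *\<^sub>R measure (K t) ({0..u1}\<times>{0..u2}))"
        by (auto simp: fd indicator_def fun_eq_iff)
      then show ?thesis using False ck_val[OF K u, of "min x 1"] by (simp add: set_lebesgue_integral_def)
    qed
    moreover have "(\<lambda>t. f t * indicator {x<..} t) = (\<lambda>t. f t - f t * indicator {..x} t)"
      by (auto simp: indicator_def fun_eq_iff)
    moreover have "integrable lborel (\<lambda>t. f t * indicator {..x} t)"
      using i1 by (intro integrable_real_mult_indicator) auto
    ultimately show ?thesis using i1 e1 by simp
  qed
  have dens: "density lborel (\<lambda>t. ennreal (f1 t)) = density lborel (\<lambda>t. ennreal (f2 t))"
  proof (rule measure_eqI_lessThan)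
    fix x :: real
    have "emeasure (density lborel (\<lambda>t. ennreal (f t))) {x<..} = ennreal (integral\<^sup>L lborel (\<lambda>t. f t * indicator {x<..} t))"
      if "f \<in> borel_measurable lborel" "\<And>t. f t \<ge> 0" "integrable lborel f" for f
    proof -
      have "emeasure (density lborel (\<lambda>t. ennreal (f t))) {x<..} = (\<integral>\<^sup>+t. ennreal (f t) * indicator {x<..} t \<partial>lborel)"
        using that by (subst emeasure_density) auto
      also have "\<dots> = (\<integral>\<^sup>+t. ennreal (f t * indicator {x<..} t) \<partial>lborel)"
        by (intro nn_integral_cong) (auto simp: indicator_def)
      also have "\<dots> = ennreal (integral\<^sup>L lborel (\<lambda>t. f t * indicator {x<..} t))"
        using that by (intro nn_integral_eq_integral integrable_real_mult_indicator) (auto simp: indicator_def)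
      finally show ?thesis .
    qed
    note * = this
    have i1: "integrable lborel f1" unfolding f1_def[abs_def] using ck_integrable[OF K1] .
    have i2: "integrable lborel f2" unfolding f2_def[abs_def] using ck_integrable[OF K2] .
    show "emeasure (density lborel (\<lambda>t. ennreal (f1 t))) {x<..} = emeasure (density lborel (\<lambda>t. ennreal (f2 t))) {x<..}"
      using *[OF f1m f1p i1] *[OF f2m f2p i2] key[OF K1, of f1 x] key[OF K2, of f2 x] by (simp add: f1_def f2_def)
    show "emeasure (density lborel (\<lambda>t. ennreal (f1 t))) {x<..} < \<infinity>"
      using *[OF f1m f1p i1] by simp
  qed simp_all
  have "AE t in lborel. ennreal (f1 t) = ennreal (f2 t)"
    by (rule sigma_finite_measure.density_unique[OF sigma_finite_lborel _ _ dens]) auto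
  then show ?thesis
    by eventually_elim (use f1p f2p in \<open>auto simp: f1_def f2_def\<close>)
qed

lemma rect_lim:
  fixes M :: "(real\<times>real) measure"
  assumes fm: "finite_measure M" and s: "sets M = sets borel"
  shows "(\<lambda>m. measure M ({0..u1 + 1/Suc m}\<times>{0..u2 + 1/Suc m})) \<longlonglongrightarrow> measure M ({0..u1}\<times>{0..u2})"
proof -
  interpret finite_measure M by fact
  define A where "A m = {0..u1 + 1/Suc m}\<times>{0..u2 + 1/Suc m}" for m :: nat
  have "A m \<in> sets M" for m unfolding A_def s by (rule rect_sets)
  then have "range A \<subseteq> sets M" by auto
  moreover have "decseq A"
    unfolding decseq_def A_def
  proof (intro allI impI)
    fix m n :: nat assume "m \<le> n"
    then have "1/real (Suc n) \<le> 1/real (Suc m)" by (intro divide_left_mono) auto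
    then show "{0..u1 + 1/Suc n}\<times>{0..u2 + 1/Suc n} \<subseteq> {0..u1 + 1/Suc m}\<times>{0..u2 + 1/Suc m}" by auto
  qed
  ultimately have "(\<lambda>m. measure M (A m)) \<longlonglongrightarrow> measure M (\<Inter>m. A m)"
    by (rule finite_Lim_measure_decseq)
  moreover have "(\<Inter>m. A m) = {0..u1}\<times>{0..u2}"
  proof (intro equalityI subsetI)
    fix p assume p: "p \<in> (\<Inter>m. A m)"
    obtain x y where pxy: "p = (x,y)" by force
    have x: "0 \<le> x \<and> x \<le> u1 + 1/Suc m" and y: "0 \<le> y \<and> y \<le> u2 + 1/Suc m" for m
      using p by (auto simp: A_def pxy)
    have "x \<le> u1"
    proof (rule ccontr)
      assume "\<not> x \<le> u1"
      then obtain m where "inverse (real (Suc m)) < x - u1" using reals_Archimedean[of "x - u1"] by auto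
      then have "1/real (Suc m) < x - u1" by (simp add: inverse_eq_divide)
      with x[of m] show False by linarith
    qed
    moreover have "y \<le> u2"
    proof (rule ccontr)
      assume "\<not> y \<le> u2"
      then obtain m where "inverse (real (Suc m)) < y - u2" using reals_Archimedean[of "y - u2"] by auto
      then have "1/real (Suc m) < y - u2" by (simp add: inverse_eq_divide)
      with y[of m] show False by linarith
    qed
    ultimately show "p \<in> {0..u1}\<times>{0..u2}" using x[of 0] y[of 0] pxy by auto
  next
    fix p assume "p \<in> {0..u1}\<times>{0..u2}"
    moreover have "0 \<le> 1/real (Suc m)" for m by simp
    ultimately show "p \<in> (\<Inter>m. A m)" unfolding A_def by (auto simp del: of_nat_Suc intro!: add_increasing2)
  qed
  ultimately show ?thesis by (simp add: A_def)
qed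

definition qq :: "real \<Rightarrow> nat \<Rightarrow> real" where
  "qq u m = of_int \<lceil>u * real (Suc m)\<rceil> / real (Suc m)"

lemma qq_props:
  assumes "0 \<le> u" "u \<le> 1"
  shows "qq u m \<in> \<rat>" "u \<le> qq u m" "qq u m \<le> u + 1/Suc m" "qq u m \<le> 1" "0 \<le> qq u m"
proof -
  have sp: "real (Suc m) > 0" by simp
  show "qq u m \<in> \<rat>" unfolding qq_def by (intro Rats_divide) auto
  have a: "u * real (Suc m) \<le> of_int \<lceil>u * real (Suc m)\<rceil>" by (rule le_of_int_ceiling)
  have b: "of_int \<lceil>u * real (Suc m)\<rceil> < u * real (Suc m) + 1" using ceiling_correct[of "u * real (Suc m)"] by simp
  have "u * real (Suc m) \<le> 1 * real (Suc m)" using assms by (intro mult_right_mono) auto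
  then have c: "\<lceil>u * real (Suc m)\<rceil> \<le> int (Suc m)" by (simp add: ceiling_le_iff)
  show uq: "u \<le> qq u m" unfolding qq_def using a sp by (simp add: le_divide_eq)
  have "qq u m \<le> (u * real (Suc m) + 1) / real (Suc m)" unfolding qq_def
    by (rule divide_right_mono) (use b in auto)
  also have "\<dots> = u + 1/Suc m" using sp by (simp add: field_simps)
  finally show "qq u m \<le> u + 1/Suc m" .
  have "of_int \<lceil>u * real (Suc m)\<rceil> \<le> real (Suc m)" using c by linarith
  then show "qq u m \<le> 1" unfolding qq_def using sp by (simp add: divide_le_eq)
  show "0 \<le> qq u m" using uq assms by linarith
qed

lemma rect_lim_q:
  fixes M :: "(real\<times>real) measure"
  assumes fm: "finite_measure M" and s: "sets M = sets borel" and u: "u1 \<in> {0..1}" "u2 \<in> {0..1}"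
  shows "(\<lambda>m. measure M ({0..qq u1 m}\<times>{0..qq u2 m})) \<longlonglongrightarrow> measure M ({0..u1}\<times>{0..u2})"
proof (rule tendsto_sandwich[OF _ _ tendsto_const rect_lim[OF fm s]])
  interpret finite_measure M by fact
  show "\<forall>\<^sub>F m in sequentially. measure M ({0..u1}\<times>{0..u2}) \<le> measure M ({0..qq u1 m}\<times>{0..qq u2 m})"
  proof (intro always_eventually allI finite_measure_mono)
    fix m
    have "u1 \<le> qq u1 m" "u2 \<le> qq u2 m" using qq_props u by auto
    then show "{0..u1}\<times>{0..u2} \<subseteq> {0..qq u1 m}\<times>{0..qq u2 m}"
      by (intro Sigma_mono) auto
  qed (use s in simp)
  show "\<forall>\<^sub>F m in sequentially. measure M ({0..qq u1 m}\<times>{0..qq u2 m}) \<le> measure M ({0..u1 + 1/Suc m}\<times>{0..u2 + 1/Suc m})"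
  proof (intro always_eventually allI finite_measure_mono)
    fix m
    have "qq u1 m \<le> u1 + 1/Suc m" "qq u2 m \<le> u2 + 1/Suc m" using qq_props u by auto
    then show "{0..qq u1 m}\<times>{0..qq u2 m} \<subseteq> {0..u1 + 1/Suc m}\<times>{0..u2 + 1/Suc m}"
      by (intro Sigma_mono) auto
  qed (use s in simp)
qed

lemma kernel_ae_all:
  assumes K1: "cond_kernel C K1" and K2: "cond_kernel C K2"
  shows "AE t in lborel. t \<in> {0..1} \<longrightarrow> (\<forall>u1\<in>{0..1}. \<forall>u2\<in>{0..1}.
      measure (K1 t) ({0..u1}\<times>{0..u2}) = measure (K2 t) ({0..u1}\<times>{0..u2}))"
proof -
  define Q where "Q = {q \<in> \<rat>. 0 \<le> q \<and> q \<le> (1::real)}"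
  have "countable Q" unfolding Q_def by (rule countable_subset[OF _ countable_rat]) auto
  then have cQ: "countable (Q \<times> Q)" by auto
  have "AE t in lborel. \<forall>p\<in>Q\<times>Q. t \<in> {0..1} \<longrightarrow> measure (K1 t) ({0..fst p}\<times>{0..snd p}) = measure (K2 t) ({0..fst p}\<times>{0..snd p})"
  proof (subst AE_ball_countable[OF cQ], intro ballI)
    fix p assume "p \<in> Q\<times>Q"
    then have "fst p \<in> {0..1}" "snd p \<in> {0..1}" by (auto simp: Q_def)
    from kernel_ae_rect[OF K1 K2 this] show "AE t in lborel. t \<in> {0..1} \<longrightarrow> measure (K1 t) ({0..fst p}\<times>{0..snd p}) = measure (K2 t) ({0..fst p}\<times>{0..snd p})" .
  qed
  then show ?thesis
  proof eventually_elim
    case (elim t)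
    show ?case
    proof (intro impI ballI)
      fix u1 u2 :: real assume t: "t \<in> {0..1}" and u: "u1 \<in> {0..1}" "u2 \<in> {0..1}"
      have fm1: "finite_measure (K1 t)" using ck_prob[OF K1] unfolding prob_space_def by blast
      have fm2: "finite_measure (K2 t)" using ck_prob[OF K2] unfolding prob_space_def by blast
      have "qq u1 m \<in> Q \<and> qq u2 m \<in> Q" for m using qq_props[of u1 m] qq_props[of u2 m] u by (auto simp: Q_def)
      then have "(qq u1 m, qq u2 m) \<in> Q \<times> Q" for m by auto
      have eq: "measure (K1 t) ({0..qq u1 m}\<times>{0..qq u2 m}) = measure (K2 t) ({0..qq u1 m}\<times>{0..qq u2 m})" for m
        using bspec[OF elim \<open>(qq u1 m, qq u2 m) \<in> Q \<times> Q\<close>] t by simp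
      have l1: "(\<lambda>m. measure (K2 t) ({0..qq u1 m}\<times>{0..qq u2 m})) \<longlonglongrightarrow> measure (K1 t) ({0..u1}\<times>{0..u2})"
        using rect_lim_q[OF fm1 ck_sets[OF K1] u] unfolding eq .
      show "measure (K1 t) ({0..u1}\<times>{0..u2}) = measure (K2 t) ({0..u1}\<times>{0..u2})"
        using LIMSEQ_unique[OF l1 rect_lim_q[OF fm2 ck_sets[OF K2] u]] .
    qed
  qed
qed

lemma copula2_prod: "copula2 (\<lambda>x y. x * y)"
  unfolding copula2_def
proof (intro conjI ballI impI)
  fix a1 b1 a2 b2 :: real assume "a1 \<le> b1" "a2 \<le> b2"
  then have "0 \<le> (b1 - a1) * (b2 - a2)" by simp
  then show "0 \<le> b1 * b2 - a1 * b2 - b1 * a2 + a1 * a2" by (simp add: algebra_simps)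
qed auto

lemma copula2_bnd:
  assumes "copula2 A" "x \<in> {0..1}" "y \<in> {0..1}"
  shows "0 \<le> A x y \<and> A x y \<le> 1"
proof -
  have z: "\<forall>u\<in>{0..1}. A 0 u = 0 \<and> A u 0 = 0 \<and> A u 1 = u \<and> A 1 u = u" using assms(1) unfolding copula2_def by blast
  have inc: "\<And>a1 b1 a2 b2. a1\<in>{0..1} \<Longrightarrow> b1\<in>{0..1} \<Longrightarrow> a2\<in>{0..1} \<Longrightarrow> b2\<in>{0..1} \<Longrightarrow>
        a1 \<le> b1 \<Longrightarrow> a2 \<le> b2 \<Longrightarrow> A b1 b2 - A a1 b2 - A b1 a2 + A a1 a2 \<ge> 0"
    using assms(1) unfolding copula2_def by blast
  have "A x y - A 0 y - A x 0 + A 0 0 \<ge> 0" using inc[of 0 x 0 y] assms by auto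
  moreover have "A x 1 - A 0 1 - A x y + A 0 y \<ge> 0" using inc[of 0 x y 1] assms by auto
  ultimately show ?thesis using z assms by auto
qed

lemma rect_mono1:
  fixes M :: "(real\<times>real) measure"
  assumes "finite_measure M" "sets M = sets borel" "a \<le> b"
  shows "measure M ({0..a}\<times>{0..y}) \<le> measure M ({0..b}\<times>{0..y})"
proof -
  interpret finite_measure M by fact
  show ?thesis
  proof (rule finite_measure_mono)
    show "{0..a}\<times>{0..y} \<subseteq> {0..b}\<times>{0..y}" using assms(3) by (intro Sigma_mono) auto
    show "{0..b}\<times>{0..y} \<in> sets M" unfolding assms(2) by (rule rect_sets)
  qed
qed

lemma rect_mono2:
  fixes M :: "(real\<times>real) measure"
  assumes "finite_measure M" "sets M = sets borel" "a \<le> b"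
  shows "measure M ({0..y}\<times>{0..a}) \<le> measure M ({0..y}\<times>{0..b})"
proof -
  interpret finite_measure M by fact
  show ?thesis
  proof (rule finite_measure_mono)
    show "{0..y}\<times>{0..a} \<subseteq> {0..y}\<times>{0..b}" using assms(3) by (intro Sigma_mono) auto
    show "{0..y}\<times>{0..b} \<in> sets M" unfolding assms(2) by (rule rect_sets)
  qed
qed

lemma rect_key1:
  fixes M :: "(real\<times>real) measure"
  assumes fm: "finite_measure M" and s: "sets M = sets borel" and y: "y \<le> 1"
    and eq: "measure M ({0..a}\<times>{0..1}) = measure M ({0..b}\<times>{0..1})"
  shows "measure M ({0..a}\<times>{0..y}) = measure M ({0..b}\<times>{0..y})"
proof -
  have *: "measure M ({0..a}\<times>{0..y}) = measure M ({0..b}\<times>{0..y})"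
    if "a \<le> b" "measure M ({0..a}\<times>{0..1}) = measure M ({0..b}\<times>{0..1})" for a b
    using rect2_incr[OF fm s \<open>a \<le> b\<close> y] rect_mono1[OF fm s \<open>a \<le> b\<close>, of y] that by linarith
  show ?thesis
  proof (cases "a \<le> b")
    case True
    then show ?thesis using *[of a b] eq by blast
  next
    case False
    then have "b \<le> a" by linarith
    then show ?thesis using *[of b a] eq by metis
  qed
qed

lemma rect_key2:
  fixes M :: "(real\<times>real) measure"
  assumes fm: "finite_measure M" and s: "sets M = sets borel" and x: "x \<le> 1"
    and eq: "measure M ({0..1}\<times>{0..a}) = measure M ({0..1}\<times>{0..b})"
  shows "measure M ({0..x}\<times>{0..a}) = measure M ({0..x}\<times>{0..b})"
proof -
  have *: "measure M ({0..x}\<times>{0..a}) = measure M ({0..x}\<times>{0..b})"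
    if "a \<le> b" "measure M ({0..1}\<times>{0..a}) = measure M ({0..1}\<times>{0..b})" for a b
    using rect2_incr[OF fm s x \<open>a \<le> b\<close>] rect_mono2[OF fm s \<open>a \<le> b\<close>, of x] that by linarith
  show ?thesis
  proof (cases "a \<le> b")
    case True
    then show ?thesis using *[of a b] eq by blast
  next
    case False
    then have "b \<le> a" by linarith
    then show ?thesis using *[of b a] eq by metis
  qed
qed

lemma sklar:
  fixes M :: "(real\<times>real) measure"
  assumes ps: "prob_space M" and s: "sets M = sets borel" and sq: "emeasure M ({0..1}\<times>{0..1}) = 1"
    and c1: "continuous_on {0..1} (\<lambda>x. measure M ({0..x}\<times>{0..1}))" and z1: "measure M ({0..0}\<times>{0..1}) = 0"
    and c2: "continuous_on {0..1} (\<lambda>y. measure M ({0..1}\<times>{0..y}))" and z2: "measure M ({0..1}\<times>{0..0}) = 0"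
  shows "\<exists>A. copula2 A \<and> (\<forall>u1\<in>{0..1}. \<forall>u2\<in>{0..1}. measure M ({0..u1}\<times>{0..u2}) =
            A (measure M ({0..u1}\<times>{0..1})) (measure M ({0..1}\<times>{0..u2})))"
proof -
  interpret prob_space M by fact
  have fm: "finite_measure M" by unfold_locales
  define F1 where "F1 x = measure M ({0..x}\<times>{0..1})" for x
  define F2 where "F2 y = measure M ({0..1}\<times>{0..y})" for y
  have sq1: "measure M ({0..1}\<times>{0..1}) = 1" using sq by (simp add: measure_def)
  have F1m: "x \<le> y \<Longrightarrow> F1 x \<le> F1 y" for x y unfolding F1_def by (rule rect_mono1[OF fm s])
  have F2m: "x \<le> y \<Longrightarrow> F2 x \<le> F2 y" for x y unfolding F2_def by (rule rect_mono2[OF fm s])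
  have ex1: "\<exists>x. x \<in> {0..1} \<and> F1 x = v" if "v \<in> {0..1}" for v
    using IVT'[of F1 0 v 1] c1 z1 sq1 that by (auto simp: F1_def)
  have ex2: "\<exists>x. x \<in> {0..1} \<and> F2 x = v" if "v \<in> {0..1}" for v
    using IVT'[of F2 0 v 1] c2 z2 sq1 that by (auto simp: F2_def)
  define x1 where "x1 v = (SOME x. x \<in> {0..1} \<and> F1 x = v)" for v
  define x2 where "x2 v = (SOME x. x \<in> {0..1} \<and> F2 x = v)" for v
  have x1p: "x1 v \<in> {0..1} \<and> F1 (x1 v) = v" if "v \<in> {0..1}" for v
    unfolding x1_def using someI_ex[OF ex1[OF that]] .
  have x2p: "x2 v \<in> {0..1} \<and> F2 (x2 v) = v" if "v \<in> {0..1}" for v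
    unfolding x2_def using someI_ex[OF ex2[OF that]] .
  define A where "A s1 s2 = measure M ({0..x1 s1}\<times>{0..x2 s2})" for s1 s2
  have F1r: "F1 u \<in> {0..1}" for u unfolding F1_def using prob_le_1 by auto
  have F2r: "F2 u \<in> {0..1}" for u unfolding F2_def using prob_le_1 by auto
  have rep: "measure M ({0..u1}\<times>{0..u2}) = A (F1 u1) (F2 u2)" if "u1 \<in> {0..1}" "u2 \<in> {0..1}" for u1 u2
  proof -
    have a1: "F1 (x1 (F1 u1)) = F1 u1" using x1p[OF F1r[of u1]] by blast
    have a2: "F2 (x2 (F2 u2)) = F2 u2" using x2p[OF F2r[of u2]] by blast
    have b2: "x2 (F2 u2) \<le> 1" using x2p[OF F2r[of u2]] by simp
    have "A (F1 u1) (F2 u2) = measure M ({0..u1}\<times>{0..x2 (F2 u2)})"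
      unfolding A_def by (rule rect_key1[OF fm s b2]) (use a1 in \<open>simp only: F1_def\<close>)
    also have "\<dots> = measure M ({0..u1}\<times>{0..u2})"
      using that by (intro rect_key2[OF fm s, of u1 "x2 (F2 u2)" u2]) (use a2 in \<open>simp_all add: F2_def\<close>)
    finally show ?thesis by simp
  qed
  have x1mono: "x1 a \<le> x1 b" if "a \<in> {0..1}" "b \<in> {0..1}" "a \<le> b" for a b
  proof (cases "a = b")
    case False
    show ?thesis
    proof (rule ccontr)
      assume "\<not> x1 a \<le> x1 b"
      then have "F1 (x1 b) \<le> F1 (x1 a)" by (intro F1m) auto
      then show False using x1p[OF that(1)] x1p[OF that(2)] False that(3) by auto
    qed
  qed simp
  have x2mono: "x2 a \<le> x2 b" if "a \<in> {0..1}" "b \<in> {0..1}" "a \<le> b" for a b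
  proof (cases "a = b")
    case False
    show ?thesis
    proof (rule ccontr)
      assume "\<not> x2 a \<le> x2 b"
      then have "F2 (x2 b) \<le> F2 (x2 a)" by (intro F2m) auto
      then show False using x2p[OF that(1)] x2p[OF that(2)] False that(3) by auto
    qed
  qed simp
  have "copula2 A"
    unfolding copula2_def
  proof (intro conjI ballI impI)
    fix u :: real assume u: "u \<in> {0..1}"
    have "0 \<le> A 0 u" unfolding A_def by simp
    moreover have "A 0 u \<le> F1 (x1 0)" unfolding A_def F1_def using x2p[OF u] by (intro rect_mono2[OF fm s]) auto
    ultimately show "A 0 u = 0" using x1p[of 0] by auto
    have "0 \<le> A u 0" unfolding A_def by simp
    moreover have "A u 0 \<le> F2 (x2 0)" unfolding A_def F2_def using x1p[OF u] by (intro rect_mono1[OF fm s]) auto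
    ultimately show "A u 0 = 0" using x2p[of 0] by auto
    have "A u 1 = measure M ({0..x1 u}\<times>{0..1})" unfolding A_def using x2p[of 1] x1p[OF u] sq1
      by (intro rect_key2[OF fm s, of "x1 u" "x2 1" 1]) (auto simp: F2_def)
    then show "A u 1 = u" using x1p[OF u] by (simp add: F1_def)
    have "A 1 u = measure M ({0..1}\<times>{0..x2 u})" unfolding A_def using x1p[of 1] x2p[OF u] sq1
      by (intro rect_key1[OF fm s, of "x2 u" "x1 1" 1]) (auto simp: F1_def)
    then show "A 1 u = u" using x2p[OF u] by (simp add: F2_def)
  next
    fix a1 b1 a2 b2 :: real assume "a1 \<in> {0..1}" "b1 \<in> {0..1}" "a2 \<in> {0..1}" "b2 \<in> {0..1}" "a1 \<le> b1" "a2 \<le> b2"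
    then show "0 \<le> A b1 b2 - A a1 b2 - A b1 a2 + A a1 a2"
      unfolding A_def by (intro rect2_incr[OF fm s] x1mono x2mono)
  qed
  then show ?thesis using rep unfolding F1_def F2_def by blast
qed

lemma cont_zero:
  fixes f :: "real \<Rightarrow> real"
  assumes c: "continuous_on UNIV f" and z: "\<And>x. x < 0 \<Longrightarrow> f x = 0"
  shows "f 0 = 0"
proof -
  have ic: "isCont f 0" using c by (simp add: continuous_on_eq_continuous_at)
  have "(\<lambda>n. - inverse (real (Suc n))) \<longlonglongrightarrow> - 0"
    by (intro tendsto_minus LIMSEQ_inverse_real_of_nat)
  then have "(\<lambda>n. f (- inverse (real (Suc n)))) \<longlonglongrightarrow> f 0"
    using isCont_tendsto_compose[OF ic] by simp
  moreover have "f (- inverse (real (Suc n))) = 0" for n by (intro z) simp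
  ultimately have "(\<lambda>n. 0) \<longlonglongrightarrow> f 0" by simp
  then show ?thesis using LIMSEQ_const_iff by metis
qed

lemma F13_neg: "x < 0 \<Longrightarrow> F13 K x t = 0" by (simp add: F13_def)
lemma F23_neg: "x < 0 \<Longrightarrow> F23 K x t = 0" by (simp add: F23_def)

lemma condcop_ae:
  assumes CC: "C \<in> C3c" and K: "cond_kernel C K"
  shows "AE t in lborel. t \<in> {0..1} \<longrightarrow> copula2 (cond_copula K t) \<and>
     (\<forall>u1\<in>{0..1}. \<forall>u2\<in>{0..1}. measure (K t) ({0..u1}\<times>{0..u2}) = cond_copula K t (F13 K u1 t) (F23 K u2 t))"
proof -
  obtain K0 where K0: "cond_kernel C K0" and ae0: "AE t in lborel. t \<in> {0..1} \<longrightarrow>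
               continuous_on UNIV (\<lambda>x. F13 K0 x t) \<and> continuous_on UNIV (\<lambda>x. F23 K0 x t)"
    using CC unfolding C3c_def by blast
  from ae0 kernel_ae_all[OF K0 K] show ?thesis
  proof eventually_elim
    case (elim t)
    show ?case
    proof
      assume t: "t \<in> {0..1}"
      have eqR: "measure (K0 t) ({0..u1}\<times>{0..u2}) = measure (K t) ({0..u1}\<times>{0..u2})" if "u1 \<in> {0..1}" "u2 \<in> {0..1}" for u1 u2
        using elim t that by blast
      have c1: "continuous_on UNIV (\<lambda>x. F13 K0 x t)" and c2: "continuous_on UNIV (\<lambda>x. F23 K0 x t)" using elim t by auto
      have z1: "F13 K0 0 t = 0" by (rule cont_zero[OF c1 F13_neg])
      have z2: "F23 K0 0 t = 0" by (rule cont_zero[OF c2 F23_neg])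
      have e1: "F13 K x t = F13 K0 x t" if "x \<in> {0..1}" for x using eqR[OF that, of 1] by (simp add: F13_def)
      have e2: "F23 K x t = F23 K0 x t" if "x \<in> {0..1}" for x using eqR[OF _ that, of 1] by (simp add: F23_def)
      have cc1: "continuous_on {0..1} (\<lambda>x. measure (K t) ({0..x}\<times>{0..1}))"
      proof (rule continuous_on_eq[OF continuous_on_subset[OF c1]])
        show "\<And>x. x \<in> {0..1} \<Longrightarrow> F13 K0 x t = measure (K t) ({0..x}\<times>{0..1})" using e1 by (simp add: F13_def)
      qed simp
      have cc2: "continuous_on {0..1} (\<lambda>x. measure (K t) ({0..1}\<times>{0..x}))"
      proof (rule continuous_on_eq[OF continuous_on_subset[OF c2]])
        show "\<And>x. x \<in> {0..1} \<Longrightarrow> F23 K0 x t = measure (K t) ({0..1}\<times>{0..x})" using e2 by (simp add: F23_def)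
      qed simp
      have zz1: "measure (K t) ({0..0}\<times>{0..1}) = 0" using e1[of 0] z1 by (simp add: F13_def)
      have zz2: "measure (K t) ({0..1}\<times>{0..0}) = 0" using e2[of 0] z2 by (simp add: F23_def)
      from sklar[OF ck_prob[OF K] ck_sets[OF K] ck_sq[OF K] cc1 zz1 cc2 zz2]
      have "\<exists>A. copula2 A \<and> (\<forall>u1\<in>{0..1}. \<forall>u2\<in>{0..1}. measure (K t) ({0..u1}\<times>{0..u2}) = A (F13 K u1 t) (F23 K u2 t))"
        by (simp add: F13_def F23_def)
      from someI_ex[OF this]
      show "copula2 (cond_copula K t) \<and> (\<forall>u1\<in>{0..1}. \<forall>u2\<in>{0..1}. measure (K t) ({0..u1}\<times>{0..u2}) = cond_copula K t (F13 K u1 t) (F23 K u2 t))"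
        unfolding cond_copula_def .
    qed
  qed
qed

lemma lint_01:
  fixes f :: "real \<Rightarrow> real"
  assumes ae: "AE t in lebesgue. t \<in> {0..v} \<longrightarrow> 0 \<le> f t \<and> f t \<le> 1" and v: "v \<le> 1"
  shows "0 \<le> (LINT t:{0..v}|lebesgue. f t) \<and> (LINT t:{0..v}|lebesgue. f t) \<le> 1"
proof (cases "integrable lebesgue (\<lambda>t. indicator {0..v} t *\<^sub>R f t)")
  case True
  have "0 \<le> integral\<^sup>L lebesgue (\<lambda>t. indicator {0..v} t *\<^sub>R f t)"
    using ae by (intro integral_nonneg_AE) (auto elim!: eventually_mono simp: indicator_def)
  moreover have "integral\<^sup>L lebesgue (\<lambda>t. indicator {0..v} t *\<^sub>R f t) \<le> integral\<^sup>L lebesgue (indicator {0..v} :: real \<Rightarrow> real)"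
  proof (rule integral_mono_AE[OF True])
    show "integrable lebesgue (indicator {0..v} :: real \<Rightarrow> real)"
      using integrable_indicator[of "{0..v}" lebesgue "1::real"] by (simp add: emeasure_lborel_Icc_eq)
    show "AE t in lebesgue. indicator {0..v} t *\<^sub>R f t \<le> indicator {0..v} t"
      using ae by eventually_elim (auto simp: indicator_def)
  qed
  moreover have "integral\<^sup>L lebesgue (indicator {0..v} :: real \<Rightarrow> real) \<le> 1"
    using v by (simp add: measure_def emeasure_lborel_Icc_eq)
  ultimately show ?thesis by (simp add: set_lebesgue_integral_def)
next
  case False
  then show ?thesis by (simp add: set_lebesgue_integral_def not_integrable_integral_eq)
qed

lemma kernel_exists: "C \<in> C3c \<Longrightarrow> cond_kernel C (SOME K. cond_kernel C K)"
  unfolding C3c_def by (metis (mono_tags, lifting) mem_Collect_eq someI_ex)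

lemma partial_copula_bnd:
  assumes CC: "C \<in> C3c" and K: "cond_kernel C K" and s: "s1 \<in> {0..1}" "s2 \<in> {0..1}"
  shows "0 \<le> partial_copula K s1 s2 \<and> partial_copula K s1 s2 \<le> 1"
proof -
  have "AE t in lborel. t \<in> {0..1} \<longrightarrow> 0 \<le> cond_copula K t s1 s2 \<and> cond_copula K t s1 s2 \<le> 1"
    using condcop_ae[OF CC K] by eventually_elim (use copula2_bnd s in blast)
  then have "AE t in lebesgue. t \<in> {0..1} \<longrightarrow> 0 \<le> cond_copula K t s1 s2 \<and> cond_copula K t s1 s2 \<le> 1"
    by (rule AE_completion)
  then show ?thesis unfolding partial_copula_def by (intro lint_01) auto
qed

lemma psi_bnd:
  assumes CC: "C \<in> C3c" and u: "u1 \<in> {0..1}" "u2 \<in> {0..1}" "v \<in> {0..1}"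
  shows "0 \<le> psi C u1 u2 v \<and> psi C u1 u2 v \<le> 1"
proof -
  define K where "K = (SOME K. cond_kernel C K)"
  have K: "cond_kernel C K" unfolding K_def by (rule kernel_exists[OF CC])
  have "0 \<le> partial_copula K (F13 K u1 t) (F23 K u2 t) \<and> partial_copula K (F13 K u1 t) (F23 K u2 t) \<le> 1" for t
    using partial_copula_bnd[OF CC K] ck_bnd[OF K] by (simp add: F13_def F23_def)
  then show ?thesis unfolding psi_def K_def[symmetric] Let_def using u by (intro lint_01) auto
qed

lemma cop3_z: "copula3 C \<Longrightarrow> x \<in> {0..1} \<Longrightarrow> y \<in> {0..1} \<Longrightarrow> C 0 x y = 0 \<and> C x 0 y = 0 \<and> C x y 0 = 0"
  unfolding copula3_def by blast
lemma cop3_m: "copula3 C \<Longrightarrow> x \<in> {0..1} \<Longrightarrow> C x 1 1 = x \<and> C 1 x 1 = x \<and> C 1 1 x = x"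
  unfolding copula3_def by blast
lemma cop3_box: "copula3 C \<Longrightarrow> a1\<in>{0..1} \<Longrightarrow> b1\<in>{0..1} \<Longrightarrow> a2\<in>{0..1} \<Longrightarrow> b2\<in>{0..1} \<Longrightarrow> a3\<in>{0..1} \<Longrightarrow> b3\<in>{0..1} \<Longrightarrow>
        a1 \<le> b1 \<Longrightarrow> a2 \<le> b2 \<Longrightarrow> a3 \<le> b3 \<Longrightarrow>
        C b1 b2 b3 - C a1 b2 b3 - C b1 a2 b3 - C b1 b2 a3
          + C a1 a2 b3 + C a1 b2 a3 + C b1 a2 a3 - C a1 a2 a3 \<ge> 0"
  unfolding copula3_def by blast

lemma cop3_lip1:
  assumes C: "copula3 C" and ab: "a \<le> b" "a \<in> {0..1}" "b \<in> {0..1}" and yz: "y \<in> {0..1}" "z \<in> {0..1}"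
  shows "0 \<le> C b y z - C a y z \<and> C b y z - C a y z \<le> b - a"
proof -
  have 1: "C b y z - C a y z - C b 0 z - C b y 0 + C a 0 z + C a y 0 + C b 0 0 - C a 0 0 \<ge> 0"
    using cop3_box[OF C, of a b 0 y 0 z] ab yz by auto
  have 2: "C b y 1 - C a y 1 - C b 0 1 - C b y z + C a 0 1 + C a y z + C b 0 z - C a 0 z \<ge> 0"
    using cop3_box[OF C, of a b 0 y z 1] ab yz by auto
  have 3: "C b 1 1 - C a 1 1 - C b y 1 - C b 1 0 + C a y 1 + C a 1 0 + C b y 0 - C a y 0 \<ge> 0"
    using cop3_box[OF C, of a b y 1 0 1] ab yz by auto
  show ?thesis using 1 2 3 ab yz cop3_z[OF C] cop3_m[OF C] by (simp add: atLeastAtMost_iff)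
qed

lemma cop3_lip2:
  assumes C: "copula3 C" and ab: "a \<le> b" "a \<in> {0..1}" "b \<in> {0..1}" and yz: "y \<in> {0..1}" "z \<in> {0..1}"
  shows "0 \<le> C y b z - C y a z \<and> C y b z - C y a z \<le> b - a"
proof -
  have 1: "C y b z - C 0 b z - C y a z - C y b 0 + C 0 a z + C 0 b 0 + C y a 0 - C 0 a 0 \<ge> 0"
    using cop3_box[OF C, of 0 y a b 0 z] ab yz by auto
  have 2: "C y b 1 - C 0 b 1 - C y a 1 - C y b z + C 0 a 1 + C 0 b z + C y a z - C 0 a z \<ge> 0"
    using cop3_box[OF C, of 0 y a b z 1] ab yz by auto
  have 3: "C 1 b 1 - C y b 1 - C 1 a 1 - C 1 b 0 + C y a 1 + C y b 0 + C 1 a 0 - C y a 0 \<ge> 0"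
    using cop3_box[OF C, of y 1 a b 0 1] ab yz by auto
  show ?thesis using 1 2 3 ab yz cop3_z[OF C] cop3_m[OF C] by (simp add: atLeastAtMost_iff)
qed

lemma cop3_lip3:
  assumes C: "copula3 C" and ab: "a \<le> b" "a \<in> {0..1}" "b \<in> {0..1}" and yz: "y \<in> {0..1}" "z \<in> {0..1}"
  shows "0 \<le> C y z b - C y z a \<and> C y z b - C y z a \<le> b - a"
proof -
  have 1: "C y z b - C 0 z b - C y 0 b - C y z a + C 0 0 b + C 0 z a + C y 0 a - C 0 0 a \<ge> 0"
    using cop3_box[OF C, of 0 y 0 z a b] ab yz by auto
  have 2: "C y 1 b - C 0 1 b - C y z b - C y 1 a + C 0 z b + C 0 1 a + C y z a - C 0 z a \<ge> 0"
    using cop3_box[OF C, of 0 y z 1 a b] ab yz by auto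
  have 3: "C 1 1 b - C y 1 b - C 1 0 b - C 1 1 a + C y 0 b + C y 1 a + C 1 0 a - C y 0 a \<ge> 0"
    using cop3_box[OF C, of y 1 0 1 a b] ab yz by auto
  show ?thesis using 1 2 3 ab yz cop3_z[OF C] cop3_m[OF C] by (simp add: atLeastAtMost_iff)
qed

lemma cop3_abs1:
  assumes C: "copula3 C" and "a \<in> {0..1}" "b \<in> {0..1}" "y \<in> {0..1}" "z \<in> {0..1}"
  shows "\<bar>C b y z - C a y z\<bar> \<le> \<bar>b - a\<bar>"
  using cop3_lip1[OF C, of a b y z] cop3_lip1[OF C, of b a y z] assms by (cases "a \<le> b") auto
lemma cop3_abs2:
  assumes C: "copula3 C" and "a \<in> {0..1}" "b \<in> {0..1}" "y \<in> {0..1}" "z \<in> {0..1}"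
  shows "\<bar>C y b z - C y a z\<bar> \<le> \<bar>b - a\<bar>"
  using cop3_lip2[OF C, of a b y z] cop3_lip2[OF C, of b a y z] assms by (cases "a \<le> b") auto
lemma cop3_abs3:
  assumes C: "copula3 C" and "a \<in> {0..1}" "b \<in> {0..1}" "y \<in> {0..1}" "z \<in> {0..1}"
  shows "\<bar>C y z b - C y z a\<bar> \<le> \<bar>b - a\<bar>"
  using cop3_lip3[OF C, of a b y z] cop3_lip3[OF C, of b a y z] assms by (cases "a \<le> b") auto

lemma cop3_lip:
  assumes C: "copula3 C" and x: "x1 \<in> {0..1}" "x2 \<in> {0..1}" "x3 \<in> {0..1}" and y: "y1 \<in> {0..1}" "y2 \<in> {0..1}" "y3 \<in> {0..1}"
  shows "\<bar>C x1 x2 x3 - C y1 y2 y3\<bar> \<le> \<bar>x1 - y1\<bar> + \<bar>x2 - y2\<bar> + \<bar>x3 - y3\<bar>"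
proof -
  have "\<bar>C x1 x2 x3 - C y1 x2 x3\<bar> \<le> \<bar>x1 - y1\<bar>" using cop3_abs1[OF C, of y1 x1 x2 x3] x y by simp
  moreover have "\<bar>C y1 x2 x3 - C y1 y2 x3\<bar> \<le> \<bar>x2 - y2\<bar>" using cop3_abs2[OF C, of y2 x2 y1 x3] x y by simp
  moreover have "\<bar>C y1 y2 x3 - C y1 y2 y3\<bar> \<le> \<bar>x3 - y3\<bar>" using cop3_abs3[OF C, of y3 x3 y1 y2] x y by simp
  ultimately show ?thesis by linarith
qed

lemma cop3_bnd:
  assumes C: "copula3 C" and x: "x \<in> {0..1}" "y \<in> {0..1}" "z \<in> {0..1}"
  shows "0 \<le> C x y z \<and> C x y z \<le> 1"
  using cop3_lip1[OF C, of 0 x y z] cop3_z[OF C, of y z] x by auto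

lemma kernel_box:
  assumes K: "cond_kernel C K" and ab: "a1 \<le> b1" "a2 \<le> b2" "a3 \<le> b3"
    and r: "a1\<in>{0..1}" "b1\<in>{0..1}" "a2\<in>{0..1}" "b2\<in>{0..1}" "a3\<in>{0..1}" "b3\<in>{0..1}"
  shows "C b1 b2 b3 - C a1 b2 b3 - C b1 a2 b3 - C b1 b2 a3
          + C a1 a2 b3 + C a1 b2 a3 + C b1 a2 a3 - C a1 a2 a3 \<ge> 0"
proof -
  define h where "h v x y t = indicator {0..v} t * measure (K t) ({0..x}\<times>{0..y})" for v x y t
  have hi[simp]: "integrable lborel (h v x y)" for v x y unfolding h_def using ck_integrable[OF K] by (simp add: fun_eq_iff)
  have hv: "C x y v = integral\<^sup>L lborel (h v x y)" if "x\<in>{0..1}" "y\<in>{0..1}" "v\<in>{0..1}" for v x y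
    using ck_val[OF K that] unfolding h_def set_lebesgue_integral_def by simp
  define G where "G t = measure (K t) ({0..b1}\<times>{0..b2}) - measure (K t) ({0..a1}\<times>{0..b2}) - measure (K t) ({0..b1}\<times>{0..a2}) + measure (K t) ({0..a1}\<times>{0..a2})" for t
  have G0: "G t \<ge> 0" for t unfolding G_def
    using rect2_incr[OF _ ck_sets[OF K] ab(1,2)] ck_prob[OF K] unfolding prob_space_def by blast
  have eq: "(\<lambda>t. (indicator {0..b3} t - indicator {0..a3} t) * G t) =
     (\<lambda>t. h b3 b1 b2 t - h b3 a1 b2 t - h b3 b1 a2 t - h a3 b1 b2 t + h b3 a1 a2 t + h a3 a1 b2 t + h a3 b1 a2 t - h a3 a1 a2 t)"
    by (simp add: fun_eq_iff h_def G_def algebra_simps)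
  have pw: "(indicator {0..b3} t - indicator {0..a3} t) * G t \<ge> (0::real)" for t
    using ab(3) G0[of t] by (auto simp: indicator_def)
  have "0 \<le> integral\<^sup>L lborel (\<lambda>t. (indicator {0..b3} t - indicator {0..a3} t) * G t)"
    by (rule integral_nonneg_AE) (use pw in auto)
  also have "\<dots> = C b1 b2 b3 - C a1 b2 b3 - C b1 a2 b3 - C b1 b2 a3 + C a1 a2 b3 + C a1 b2 a3 + C b1 a2 a3 - C a1 a2 a3"
    unfolding eq using r by (simp add: hv)
  finally show ?thesis .
qed

lemma tele3:
  fixes F :: "nat \<Rightarrow> nat \<Rightarrow> nat \<Rightarrow> real"
  shows "(\<Sum>k<c. \<Sum>i<a. \<Sum>j<b. F (Suc i) (Suc j) (Suc k) - F i (Suc j) (Suc k) - F (Suc i) j (Suc k) - F (Suc i) (Suc j) k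
            + F i j (Suc k) + F i (Suc j) k + F (Suc i) j k - F i j k)
   = F a b c - F 0 b c - F a 0 c - F a b 0 + F 0 0 c + F 0 b 0 + F a 0 0 - F 0 0 0"
proof -
  define H where "H k i j = F (Suc i) j (Suc k) - F i j (Suc k) - F (Suc i) j k + F i j k" for k i j
  define L where "L k j i = F i j (Suc k) - F i j k" for k j i
  define P where "P k = F a b k - F 0 b k - F a 0 k + F 0 0 k" for k
  have s1: "(\<Sum>j<b. F (Suc i) (Suc j) (Suc k) - F i (Suc j) (Suc k) - F (Suc i) j (Suc k) - F (Suc i) (Suc j) k
            + F i j (Suc k) + F i (Suc j) k + F (Suc i) j k - F i j k) = H k i b - H k i 0" for k i
  proof -
    have "(\<Sum>j<b. F (Suc i) (Suc j) (Suc k) - F i (Suc j) (Suc k) - F (Suc i) j (Suc k) - F (Suc i) (Suc j) k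
            + F i j (Suc k) + F i (Suc j) k + F (Suc i) j k - F i j k) = (\<Sum>j<b. H k i (Suc j) - H k i j)"
      by (intro sum.cong) (simp_all add: H_def)
    also have "\<dots> = H k i b - H k i 0" by (rule sum_lessThan_telescope)
    finally show ?thesis .
  qed
  have s2: "(\<Sum>i<a. H k i b - H k i 0) = P (Suc k) - P k" for k
  proof -
    have "(\<Sum>i<a. H k i b - H k i 0) = (\<Sum>i<a. (L k b (Suc i) - L k b i) - (L k 0 (Suc i) - L k 0 i))"
      by (intro sum.cong) (simp_all add: H_def L_def)
    also have "\<dots> = (\<Sum>i<a. L k b (Suc i) - L k b i) - (\<Sum>i<a. L k 0 (Suc i) - L k 0 i)"
      by (rule sum_subtractf)
    also have "\<dots> = (L k b a - L k b 0) - (L k 0 a - L k 0 0)" by (simp only: sum_lessThan_telescope)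
    finally show ?thesis by (simp add: L_def P_def)
  qed
  have "(\<Sum>k<c. \<Sum>i<a. \<Sum>j<b. F (Suc i) (Suc j) (Suc k) - F i (Suc j) (Suc k) - F (Suc i) j (Suc k) - F (Suc i) (Suc j) k
            + F i j (Suc k) + F i (Suc j) k + F (Suc i) j k - F i j k) = (\<Sum>k<c. P (Suc k) - P k)"
    by (simp only: s1 s2)
  also have "\<dots> = P c - P 0" by (rule sum_lessThan_telescope)
  finally show ?thesis by (simp add: P_def)
qed

lemma sum_split: "(\<Sum>r<c*m. f r) = (\<Sum>k<c. \<Sum>p<m. f (k*m + p))" for c m :: nat
proof (induction c)
  case 0
  then show ?case by simp
next
  case (Suc c)
  have "{..<Suc c * m} = {..<c*m} \<union> {c*m..<c*m+m}" by auto
  then have "(\<Sum>r<Suc c*m. f r) = (\<Sum>r<c*m. f r) + (\<Sum>r\<in>{c*m..<c*m+m}. f r)"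
    by (simp add: sum.union_disjoint ivl_disj_int)
  also have "(\<Sum>r\<in>{c*m..<c*m+m}. f r) = (\<Sum>p<m. f (c*m + p))"
  proof -
    have "(\<Sum>r\<in>{c*m..<c*m+m}. f r) = (\<Sum>r\<in>{0+c*m..<m+c*m}. f r)" by (simp add: add.commute)
    also have "\<dots> = (\<Sum>p\<in>{0..<m}. f (p + c*m))" by (rule sum.shift_bounds_nat_ivl)
    finally show ?thesis by (simp add: add.commute lessThan_atLeast0)
  qed
  finally show ?case using Suc by simp
qed

definition ck :: "nat \<Rightarrow> nat \<Rightarrow> nat" where "ck n r = r div (n*n)"
definition ci :: "nat \<Rightarrow> nat \<Rightarrow> nat" where "ci n r = (r div n) mod n"
definition cj :: "nat \<Rightarrow> nat \<Rightarrow> nat" where "cj n r = r mod n"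

lemma decode:
  assumes "i < n" "j < n"
  shows "ck n (k*(n*n) + i*n + j) = k" "ci n (k*(n*n) + i*n + j) = i" "cj n (k*(n*n) + i*n + j) = j"
proof -
  have n: "n > 0" using assms by simp
  have a: "k*(n*n) + i*n + j = (k*n + i)*n + j" by (simp add: algebra_simps)
  have b: "(k*(n*n) + i*n + j) div n = k*n + i" unfolding a using assms n by simp
  show "ci n (k*(n*n) + i*n + j) = i" unfolding ci_def b using assms by simp
  show "cj n (k*(n*n) + i*n + j) = j" unfolding cj_def a using assms by simp
  have "i*n + j < (i+1)*n" using assms by simp
  also have "(i+1)*n \<le> n*n" using assms by (intro mult_right_mono) auto
  finally have lt: "i*n + j < n*n" .
  have e: "k*(n*n) + i*n + j = (i*n + j) + k*(n*n)" by simp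
  have "((i*n + j) + k*(n*n)) div (n*n) = k + (i*n+j) div (n*n)" by (rule div_mult_self1) (use n in simp)
  then show "ck n (k*(n*n) + i*n + j) = k" unfolding ck_def e using lt by simp
qed

lemma sum3: "(\<Sum>r<c*(n*n). f r) = (\<Sum>k<c. \<Sum>i<n. \<Sum>j<n. f (k*(n*n) + i*n + j))" for c n :: nat
  unfolding sum_split[of f c "n*n"] sum_split[of _ n n] by (intro sum.cong refl) (simp add: add.assoc)

lemma sum3_decode:
  fixes c n :: nat
  shows "(\<Sum>r<c*(n*n). g (ck n r) (ci n r) (cj n r)) = (\<Sum>k<c. \<Sum>i<n. \<Sum>j<n. g k i j)"
  unfolding sum3 by (intro sum.cong refl) (simp add: decode)

lemma ck_lt: "r < n*n*n \<Longrightarrow> ck n r < n"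
proof -
  assume r: "r < n*n*n"
  then have "0 < n*n" by (cases "n = 0") auto
  then show ?thesis unfolding ck_def using r by (simp add: div_less_iff_less_mult mult.commute)
qed
lemma ci_lt: "0 < n \<Longrightarrow> ci n r < n" unfolding ci_def by simp
lemma cj_lt: "0 < n \<Longrightarrow> cj n r < n" unfolding cj_def by simp

definition phi :: "nat \<Rightarrow> nat \<Rightarrow> real \<Rightarrow> real" where
  "phi n i u = max 0 (min 1 (real n * u - real i))"

lemma phi_01: "0 \<le> phi n i u \<and> phi n i u \<le> 1" unfolding phi_def by simp
lemma phi_grid: "0 < n \<Longrightarrow> phi n i (real a / real n) = (if i < a then 1 else 0)"
  unfolding phi_def by auto
lemma phi_one: "i < n \<Longrightarrow> phi n i 1 = 1" unfolding phi_def by auto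
lemma phi_zero: "phi n i 0 = 0" unfolding phi_def by auto
lemma phi_neg: "u \<le> 0 \<Longrightarrow> phi n i u = 0"
proof -
  assume "u \<le> 0"
  then have "real n * u \<le> 0" by (simp add: mult_nonneg_nonpos)
  then show ?thesis unfolding phi_def by simp
qed
lemma phi_inv: "0 < n \<Longrightarrow> x \<in> {0..1} \<Longrightarrow> phi n i ((real i + x) / real n) = x"
  unfolding phi_def by auto
lemma phi_cont: "continuous_on UNIV (phi n i)"
  unfolding phi_def by (intro continuous_intros)

lemma clamp_sum: "y \<in> {0..real m} \<Longrightarrow> (\<Sum>i<m. max 0 (min 1 (y - real i))) = y"
proof (induction m arbitrary: y)
  case 0
  then show ?case by simp
next
  case (Suc m)
  show ?case
  proof (cases "y \<le> real m")
    case True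
    then show ?thesis using Suc by simp
  next
    case False
    have "(\<Sum>i<m. max 0 (min 1 (y - real i))) = (\<Sum>i<m. 1)"
      by (intro sum.cong) (use False in auto)
    then show ?thesis using False Suc.prems by simp
  qed
qed

lemma phi_sum: "0 < n \<Longrightarrow> x \<in> {0..1} \<Longrightarrow> (\<Sum>i<n. phi n i x) = real n * x"
  unfolding phi_def by (intro clamp_sum) (auto simp: mult_le_cancel_left1)

lemma sum_lt_filter: "a \<le> (n::nat) \<Longrightarrow> (\<Sum>i<n. if i < a then g i else 0) = (\<Sum>i<a. (g i :: real))"
proof -
  assume a: "a \<le> n"
  have "(\<Sum>i<n. if i < a then g i else 0) = sum g {i\<in>{..<n}. i < a}" by (rule sum.inter_filter[symmetric]) simp
  also have "{i\<in>{..<n}. i < a} = {..<a}" using a by auto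
  finally show ?thesis .
qed

definition gF :: "(real \<Rightarrow> real \<Rightarrow> real \<Rightarrow> real) \<Rightarrow> nat \<Rightarrow> nat \<Rightarrow> nat \<Rightarrow> nat \<Rightarrow> real" where
  "gF C n a b c = C (real a / real n) (real b / real n) (real c / real n)"

definition gbox :: "(real \<Rightarrow> real \<Rightarrow> real \<Rightarrow> real) \<Rightarrow> nat \<Rightarrow> nat \<Rightarrow> nat \<Rightarrow> nat \<Rightarrow> real" where
  "gbox C n k i j = gF C n (Suc i) (Suc j) (Suc k) - gF C n i (Suc j) (Suc k) - gF C n (Suc i) j (Suc k) - gF C n (Suc i) (Suc j) k
     + gF C n i j (Suc k) + gF C n i (Suc j) k + gF C n (Suc i) j k - gF C n i j k"

definition mw :: "(real \<Rightarrow> real \<Rightarrow> real \<Rightarrow> real) \<Rightarrow> nat \<Rightarrow> nat \<Rightarrow> real" where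
  "mw C n r = gbox C n (ck n r) (ci n r) (cj n r)"

definition Sc :: "(real \<Rightarrow> real \<Rightarrow> real \<Rightarrow> real) \<Rightarrow> nat \<Rightarrow> nat \<Rightarrow> real" where
  "Sc C n r = (\<Sum>q<r. mw C n q)"

lemma frac01: "0 < n \<Longrightarrow> a \<le> n \<Longrightarrow> real a / real n \<in> {0..1}"
  by (auto simp: divide_le_eq)

lemma gbox_nonneg:
  assumes C: "copula3 C" and n: "0 < n" and "k < n" "i < n" "j < n"
  shows "0 \<le> gbox C n k i j"
proof -
  have le: "real a / real n \<le> real (Suc a) / real n" for a using n by (simp add: divide_right_mono)
  show ?thesis unfolding gbox_def gF_def
    by (rule cop3_box[OF C]) (use assms frac01 le in auto)
qed

lemma mw_nonneg: "copula3 C \<Longrightarrow> 0 < n \<Longrightarrow> r < n*n*n \<Longrightarrow> 0 \<le> mw C n r"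
  unfolding mw_def by (intro gbox_nonneg) (auto simp: ck_lt ci_lt cj_lt)

lemma box_sum:
  assumes C: "copula3 C" and n: "0 < n" and abc: "a \<le> n" "b \<le> n" "c \<le> n"
  shows "(\<Sum>k<c. \<Sum>i<a. \<Sum>j<b. gbox C n k i j) = gF C n a b c"
proof -
  have z: "gF C n 0 y z = 0" "gF C n y 0 z = 0" "gF C n y z 0 = 0" if "y \<le> n" "z \<le> n" for y z
    unfolding gF_def using cop3_z[OF C, of "real y / real n" "real z / real n"] frac01[OF n] that by auto
  show ?thesis unfolding gbox_def tele3[of "gF C n"] using z abc by simp
qed

lemma gF_top: "copula3 C \<Longrightarrow> 0 < n \<Longrightarrow> c \<le> n \<Longrightarrow> gF C n n n c = real c / real n \<and> gF C n c n n = real c / real n \<and> gF C n n c n = real c / real n"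
  unfolding gF_def using cop3_m[of C "real c / real n"] frac01[of n c] by auto

lemma Sc_grid:
  assumes C: "copula3 C" and n: "0 < n" and c: "c \<le> n"
  shows "Sc C n (c*(n*n)) = real c / real n"
proof -
  have "Sc C n (c*(n*n)) = (\<Sum>k<c. \<Sum>i<n. \<Sum>j<n. gbox C n k i j)"
    unfolding Sc_def mw_def by (rule sum3_decode)
  also have "\<dots> = gF C n n n c" using box_sum[OF C n order.refl order.refl c] .
  finally show ?thesis using gF_top[OF C n c] by simp
qed

lemma NN: "n*(n*n) = n*n*(n::nat)" by simp

lemma Sc_mono:
  assumes C: "copula3 C" and n: "0 < n" and "r \<le> r'" "r' \<le> n*n*n"
  shows "Sc C n r \<le> Sc C n r'"
  unfolding Sc_def using assms by (intro sum_mono2) (auto intro!: mw_nonneg)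

lemma Sc_0: "Sc C n 0 = 0" by (simp add: Sc_def)
lemma Sc_N: "copula3 C \<Longrightarrow> 0 < n \<Longrightarrow> Sc C n (n*n*n) = 1"
  using Sc_grid[of C n n] by (simp add: NN)

lemma Sc_range: "copula3 C \<Longrightarrow> 0 < n \<Longrightarrow> r \<le> n*n*n \<Longrightarrow> 0 \<le> Sc C n r \<and> Sc C n r \<le> 1"
  using Sc_mono[of C n 0 r] Sc_mono[of C n r "n*n*n"] Sc_0[of C n] Sc_N[of C n] by auto

lemma marg_i:
  assumes C: "copula3 C" and n: "0 < n" and i: "i < n"
  shows "(\<Sum>k<n. \<Sum>j<n. gbox C n k i j) = 1 / real n"
proof -
  have "(\<Sum>k<n. \<Sum>i'<Suc i. \<Sum>j<n. gbox C n k i' j) = (\<Sum>k<n. \<Sum>i'<i. \<Sum>j<n. gbox C n k i' j) + (\<Sum>k<n. \<Sum>j<n. gbox C n k i j)"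
    by (simp add: sum.distrib)
  moreover have "(\<Sum>k<n. \<Sum>i'<Suc i. \<Sum>j<n. gbox C n k i' j) = gF C n (Suc i) n n" using i by (intro box_sum[OF C n]) auto
  moreover have "(\<Sum>k<n. \<Sum>i'<i. \<Sum>j<n. gbox C n k i' j) = gF C n i n n" using i by (intro box_sum[OF C n]) auto
  moreover have "gF C n (Suc i) n n = real (Suc i) / real n" "gF C n i n n = real i / real n"
    using gF_top[OF C n, of "Suc i"] gF_top[OF C n, of i] i by auto
  ultimately show ?thesis by (simp add: diff_divide_distrib[symmetric] add_divide_distrib)
qed

lemma marg_j:
  assumes C: "copula3 C" and n: "0 < n" and j: "j < n"
  shows "(\<Sum>k<n. \<Sum>i<n. gbox C n k i j) = 1 / real n"
proof -
  have "(\<Sum>k<n. \<Sum>i<n. \<Sum>j'<Suc j. gbox C n k i j') = (\<Sum>k<n. \<Sum>i<n. \<Sum>j'<j. gbox C n k i j') + (\<Sum>k<n. \<Sum>i<n. gbox C n k i j)"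
    by (simp add: sum.distrib)
  moreover have "(\<Sum>k<n. \<Sum>i<n. \<Sum>j'<Suc j. gbox C n k i j') = gF C n n (Suc j) n" using j by (intro box_sum[OF C n]) auto
  moreover have "(\<Sum>k<n. \<Sum>i<n. \<Sum>j'<j. gbox C n k i j') = gF C n n j n" using j by (intro box_sum[OF C n]) auto
  moreover have "gF C n n (Suc j) n = real (Suc j) / real n" "gF C n n j n = real j / real n"
    using gF_top[OF C n, of "Suc j"] gF_top[OF C n, of j] j by auto
  ultimately show ?thesis by (simp add: diff_divide_distrib[symmetric] add_divide_distrib)
qed

lemma wsum1:
  assumes C: "copula3 C" and n: "0 < n" and x: "x \<in> {0..1}"
  shows "(\<Sum>r<n*n*n. phi n (ci n r) x * mw C n r) = x"
proof -
  have "(\<Sum>r<n*n*n. phi n (ci n r) x * mw C n r) = (\<Sum>k<n. \<Sum>i<n. \<Sum>j<n. phi n i x * gbox C n k i j)"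
    unfolding NN[symmetric] mw_def by (rule sum3_decode)
  also have "\<dots> = (\<Sum>i<n. \<Sum>k<n. \<Sum>j<n. phi n i x * gbox C n k i j)" by (rule sum.swap)
  also have "\<dots> = (\<Sum>i<n. phi n i x * (\<Sum>k<n. \<Sum>j<n. gbox C n k i j))" by (simp add: sum_distrib_left)
  also have "\<dots> = (\<Sum>i<n. phi n i x * (1 / real n))" by (intro sum.cong refl) (simp add: marg_i[OF C n])
  also have "\<dots> = (\<Sum>i<n. phi n i x) / real n" by (simp add: sum_divide_distrib)
  also have "\<dots> = x" using phi_sum[OF n x] n by simp
  finally show ?thesis .
qed

lemma wsum2:
  assumes C: "copula3 C" and n: "0 < n" and x: "x \<in> {0..1}"
  shows "(\<Sum>r<n*n*n. phi n (cj n r) x * mw C n r) = x"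
proof -
  have "(\<Sum>r<n*n*n. phi n (cj n r) x * mw C n r) = (\<Sum>k<n. \<Sum>i<n. \<Sum>j<n. phi n j x * gbox C n k i j)"
    unfolding NN[symmetric] mw_def by (rule sum3_decode)
  also have "\<dots> = (\<Sum>k<n. \<Sum>j<n. \<Sum>i<n. phi n j x * gbox C n k i j)" by (intro sum.cong refl sum.swap)
  also have "\<dots> = (\<Sum>j<n. \<Sum>k<n. \<Sum>i<n. phi n j x * gbox C n k i j)" by (rule sum.swap)
  also have "\<dots> = (\<Sum>j<n. phi n j x * (\<Sum>k<n. \<Sum>i<n. gbox C n k i j))" by (simp add: sum_distrib_left)
  also have "\<dots> = (\<Sum>j<n. phi n j x * (1 / real n))" by (intro sum.cong refl) (simp add: marg_j[OF C n])
  also have "\<dots> = (\<Sum>j<n. phi n j x) / real n" by (simp add: sum_divide_distrib)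
  also have "\<dots> = x" using phi_sum[OF n x] n by simp
  finally show ?thesis .
qed

lemma grid_sum:
  assumes C: "copula3 C" and n: "0 < n" and abc: "a \<le> n" "b \<le> n" "c \<le> n"
  shows "(\<Sum>r<n*n*n. phi n (ci n r) (real a / real n) * phi n (cj n r) (real b / real n) *
            (if r < c*(n*n) then mw C n r else 0)) = gF C n a b c"
proof -
  have le: "c*(n*n) \<le> n*n*n" using abc by (simp add: NN[symmetric])
  have "(\<Sum>r<n*n*n. phi n (ci n r) (real a / real n) * phi n (cj n r) (real b / real n) *
            (if r < c*(n*n) then mw C n r else 0)) =
        (\<Sum>r<n*n*n. if r < c*(n*n) then phi n (ci n r) (real a / real n) * phi n (cj n r) (real b / real n) * mw C n r else 0)"
    by (intro sum.cong) auto
  also have "\<dots> = (\<Sum>r<c*(n*n). phi n (ci n r) (real a / real n) * phi n (cj n r) (real b / real n) * mw C n r)"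
    by (rule sum_lt_filter[OF le])
  also have "\<dots> = (\<Sum>k<c. \<Sum>i<n. \<Sum>j<n. (if i < a then 1 else 0) * (if j < b then 1 else 0) * gbox C n k i j)"
    unfolding mw_def using sum3_decode[where g="\<lambda>k i j. phi n i (real a / real n) * phi n j (real b / real n) * gbox C n k i j" and c=c and n=n]
    by (simp add: phi_grid[OF n])
  also have "\<dots> = (\<Sum>k<c. \<Sum>i<n. if i < a then (\<Sum>j<n. if j < b then gbox C n k i j else 0) else 0)"
    by (intro sum.cong refl) (auto intro!: sum.cong)
  also have "\<dots> = (\<Sum>k<c. \<Sum>i<n. if i < a then (\<Sum>j<b. gbox C n k i j) else 0)"
    by (intro sum.cong refl) (simp add: sum_lt_filter[OF abc(2)])
  also have "\<dots> = (\<Sum>k<c. \<Sum>i<a. \<Sum>j<b. gbox C n k i j)"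
    by (rule sum.cong[OF refl]) (rule sum_lt_filter[OF abc(1)])
  also have "\<dots> = gF C n a b c" by (rule box_sum[OF C n abc])
  finally show ?thesis .
qed

definition um :: "nat \<Rightarrow> nat \<Rightarrow> real measure" where
  "um n i = uniform_measure lborel {real i / real n .. real (Suc i) / real n}"

definition cellm :: "nat \<Rightarrow> nat \<Rightarrow> nat \<Rightarrow> (real\<times>real) measure" where
  "cellm n i j = um n i \<Otimes>\<^sub>M um n j"

lemma um_len: "0 < n \<Longrightarrow> real i / real n < real (Suc i) / real n"
  by (simp add: divide_strict_right_mono)

lemma um_prob: "0 < n \<Longrightarrow> prob_space (um n i)"
  unfolding um_def using um_len[of n i] by (intro prob_space_uniform_measure) (auto simp: emeasure_lborel_Icc_eq)

lemma um_sets: "sets (um n i) = sets borel" unfolding um_def by simp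

lemma um_meas:
  assumes n: "0 < n"
  shows "measure (um n i) {0..u} = phi n i u"
proof -
  define a where "a = real i / real n"
  define b where "b = real (Suc i) / real n"
  have ab: "a < b" unfolding a_def b_def using um_len[OF n] .
  have a0: "0 \<le> a" unfolding a_def by simp
  have ba: "b - a = 1 / real n" unfolding a_def b_def by (simp add: diff_divide_distrib[symmetric])
  have "measure (um n i) {0..u} = measure lborel ({a..b} \<inter> {0..u}) / measure lborel {a..b}"
    unfolding um_def a_def[symmetric] b_def[symmetric] using ab
    by (intro measure_uniform_measure) (auto simp: emeasure_lborel_Icc_eq)
  also have "{a..b} \<inter> {0..u} = {a..min b u}" using a0 by auto
  also have "measure lborel {a..min b u} = max 0 (min b u - a)"
    by (cases "a \<le> min b u") auto
  also have "measure lborel {a..b} = 1 / real n" using ab ba by simp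
  also have "max 0 (min b u - a) / (1 / real n) = phi n i u"
  proof -
    have "max 0 (min b u - a) / (1 / real n) = real n * max 0 (min b u - a)" by simp
    also have "\<dots> = max 0 (real n * (min b u - a))" using n by (simp add: max_mult_distrib_left)
    also have "real n * (min b u - a) = min (real n * b) (real n * u) - real n * a"
      using n by (simp add: right_diff_distrib min_mult_distrib_left)
    also have "real n * b = real i + 1" unfolding b_def using n by simp
    also have "real n * a = real i" unfolding a_def using n by simp
    finally show ?thesis unfolding phi_def by (simp add: min_diff_distrib_left)
  qed
  finally show ?thesis .
qed

lemma cellm_prob: "0 < n \<Longrightarrow> prob_space (cellm n i j)"
  unfolding cellm_def by (intro prob_space_pair um_prob)

lemma cellm_sets: "sets (cellm n i j) = sets borel"
proof -
  have "sets (cellm n i j) = sets ((borel::real measure) \<Otimes>\<^sub>M (borel::real measure))"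
    unfolding cellm_def by (intro sets_pair_measure_cong um_sets)
  also have "\<dots> = sets borel" using borel_prod[where 'a=real and 'b=real] by metis
  finally show ?thesis .
qed

lemma cellm_rect:
  assumes n: "0 < n"
  shows "measure (cellm n i j) ({0..u1}\<times>{0..u2}) = phi n i u1 * phi n j u2"
proof -
  interpret p2: prob_space "um n j" by (rule um_prob[OF n])
  interpret p1: prob_space "um n i" by (rule um_prob[OF n])
  have "emeasure (cellm n i j) ({0..u1}\<times>{0..u2}) = emeasure (um n i) {0..u1} * emeasure (um n j) {0..u2}"
    unfolding cellm_def by (rule p2.emeasure_pair_measure_Times) (auto simp: um_sets)
  then have "measure (cellm n i j) ({0..u1}\<times>{0..u2}) = measure (um n i) {0..u1} * measure (um n j) {0..u2}"
    by (simp add: measure_def enn2real_mult)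
  then show ?thesis by (simp add: um_meas[OF n])
qed

lemma cellm_sq: "0 < n \<Longrightarrow> i < n \<Longrightarrow> j < n \<Longrightarrow> emeasure (cellm n i j) ({0..1}\<times>{0..1}) = 1"
proof -
  assume n: "0 < n" and ij: "i < n" "j < n"
  interpret prob_space "cellm n i j" by (rule cellm_prob[OF n])
  have "measure (cellm n i j) ({0..1}\<times>{0..1}) = 1" using cellm_rect[OF n] phi_one ij by simp
  then show ?thesis by (simp add: emeasure_eq_measure)
qed

definition gi :: "(real \<Rightarrow> real \<Rightarrow> real \<Rightarrow> real) \<Rightarrow> nat \<Rightarrow> real \<Rightarrow> nat" where
  "gi C n t = (\<Sum>q<n*n*n - 1. if Sc C n (Suc q) < t then 1 else 0)"

definition KD :: "(real \<Rightarrow> real \<Rightarrow> real \<Rightarrow> real) \<Rightarrow> nat \<Rightarrow> real \<Rightarrow> (real\<times>real) measure" where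
  "KD C n t = cellm n (ci n (gi C n t)) (cj n (gi C n t))"

definition DD :: "(real \<Rightarrow> real \<Rightarrow> real \<Rightarrow> real) \<Rightarrow> nat \<Rightarrow> real \<Rightarrow> real \<Rightarrow> real \<Rightarrow> real" where
  "DD C n u1 u2 v = (LINT t:{0..v}|lborel. measure (KD C n t) ({0..u1}\<times>{0..u2}))"

lemma Npos: "0 < n \<Longrightarrow> 0 < n*n*(n::nat)" by simp

lemma gi_lt: "0 < n \<Longrightarrow> gi C n t < n*n*n"
proof -
  assume n: "0 < n"
  have "gi C n t \<le> (\<Sum>q<n*n*n - 1. (1::nat))" unfolding gi_def by (intro sum_mono) auto
  also have "\<dots> = n*n*n - 1" by simp
  finally show ?thesis using Npos[OF n] by linarith
qed

lemma count_lt: "r \<le> m \<Longrightarrow> (\<Sum>q<m. if q < r then 1 else 0) = (r::nat)"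
proof -
  assume r: "r \<le> m"
  have "(\<Sum>q<m. if q < r then 1 else (0::nat)) = sum (\<lambda>_. 1) {q\<in>{..<m}. q < r}"
    by (rule sum.inter_filter[symmetric]) simp
  also have "{q\<in>{..<m}. q < r} = {..<r}" using r by auto
  finally show ?thesis by simp
qed

lemma gi_eq:
  assumes C: "copula3 C" and n: "0 < n" and r: "r < n*n*n" and t: "Sc C n r < t" "t \<le> Sc C n (Suc r)"
  shows "gi C n t = r"
proof -
  have "(if Sc C n (Suc q) < t then 1 else 0) = (if q < r then 1 else (0::nat))" if q: "q < n*n*n - 1" for q
  proof (cases "q < r")
    case True
    then have "Sc C n (Suc q) \<le> Sc C n r" using r by (intro Sc_mono[OF C n]) auto
    then show ?thesis using True t by auto
  next
    case False
    then have "Sc C n (Suc r) \<le> Sc C n (Suc q)" using q by (intro Sc_mono[OF C n]) auto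
    then show ?thesis using False t by auto
  qed
  then have "gi C n t = (\<Sum>q<n*n*n - 1. if q < r then 1 else 0)" unfolding gi_def by (intro sum.cong) auto
  also have "\<dots> = r" using r by (intro count_lt) auto
  finally show ?thesis .
qed

lemma cross_exists:
  fixes f :: "nat \<Rightarrow> real"
  shows "f 0 < t \<Longrightarrow> t \<le> f m \<Longrightarrow> \<exists>r<m. f r < t \<and> t \<le> f (Suc r)"
proof (induction m)
  case 0
  then show ?case by simp
next
  case (Suc m)
  show ?case
  proof (cases "t \<le> f m")
    case True
    then obtain r where "r < m" "f r < t \<and> t \<le> f (Suc r)" using Suc by auto
    then show ?thesis by (intro exI[of _ r]) auto
  next
    case False
    then show ?thesis using Suc.prems by (intro exI[of _ m]) auto
  qed
qed

lemma gi_exists: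
  assumes C: "copula3 C" and n: "0 < n" and t: "0 < t" "t \<le> 1"
  shows "\<exists>r<n*n*n. Sc C n r < t \<and> t \<le> Sc C n (Suc r)"
  using cross_exists[of "Sc C n" t "n*n*n"] Sc_0[of C n] Sc_N[OF C n] t by auto

lemma gi_real_meas[measurable]: "(\<lambda>t. real (gi C n t)) \<in> borel_measurable borel"
proof -
  have "(\<lambda>t. real (gi C n t)) = (\<lambda>t. \<Sum>q<n*n*n - 1. if Sc C n (Suc q) < t then 1 else (0::real))"
    unfolding gi_def by (simp add: of_nat_sum if_distrib[of real] cong: if_cong)
  also have "\<dots> \<in> borel_measurable borel" by measurable
  finally show ?thesis .
qed

lemma KD_meas_eq:
  assumes n: "0 < n"
  shows "(\<lambda>t. measure (KD C n t) A) = (\<lambda>t. \<Sum>r<n*n*n. if real (gi C n t) = real r then measure (cellm n (ci n r) (cj n r)) A else 0)"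
proof
  fix t
  have "(\<Sum>r<n*n*n. if real (gi C n t) = real r then measure (cellm n (ci n r) (cj n r)) A else 0)
      = (\<Sum>r<n*n*n. if gi C n t = r then measure (cellm n (ci n r) (cj n r)) A else 0)" by simp
  also have "\<dots> = measure (KD C n t) A" using gi_lt[OF n, of C t] by (simp add: KD_def)
  finally show "measure (KD C n t) A = (\<Sum>r<n*n*n. if real (gi C n t) = real r then measure (cellm n (ci n r) (cj n r)) A else 0)" by simp
qed

lemma KD_meas: "0 < n \<Longrightarrow> (\<lambda>t. measure (KD C n t) A) \<in> borel_measurable lborel"
  unfolding KD_meas_eq by measurable

lemma KD_prob: "0 < n \<Longrightarrow> prob_space (KD C n t)" unfolding KD_def by (rule cellm_prob)
lemma KD_sets: "sets (KD C n t) = sets borel" unfolding KD_def by (rule cellm_sets)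
lemma KD_sq: "0 < n \<Longrightarrow> emeasure (KD C n t) ({0..1}\<times>{0..1}) = 1" unfolding KD_def by (intro cellm_sq ci_lt cj_lt)
lemma KD_rect: "0 < n \<Longrightarrow> measure (KD C n t) ({0..u1}\<times>{0..u2}) = phi n (ci n (gi C n t)) u1 * phi n (cj n (gi C n t)) u2"
  unfolding KD_def by (rule cellm_rect)

lemma meas_J:
  fixes a b v :: real
  assumes "0 \<le> a" "a \<le> b" "0 \<le> v"
  shows "measure lborel ({a<..b} \<inter> {0..v}) = min v b - min v a"
proof (cases "v \<le> a")
  case True
  then have "{a<..b} \<inter> {0..v} = {}" by auto
  then show ?thesis using True assms by simp
next
  case False
  then have "{a<..b} \<inter> {0..v} = {a<..min v b}" using assms by auto
  then show ?thesis using False assms by simp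
qed

lemma Sc_Suc: "Sc C n (Suc r) = Sc C n r + mw C n r" by (simp add: Sc_def)

lemma DD_formula:
  assumes C: "copula3 C" and n: "0 < n" and v: "v \<in> {0..1}"
  shows "DD C n u1 u2 v = (\<Sum>r<n*n*n. phi n (ci n r) u1 * phi n (cj n r) u2 * (min v (Sc C n (Suc r)) - min v (Sc C n r)))"
proof -
  define N where "N = n*n*n"
  define mu where "mu r = phi n (ci n r) u1 * phi n (cj n r) u2" for r
  define J where "J r = {Sc C n r<..Sc C n (Suc r)} \<inter> {0..v}" for r
  have Jm[measurable]: "J r \<in> sets lborel" for r unfolding J_def by simp
  have pw: "indicator {0..v} t * measure (KD C n t) ({0..u1}\<times>{0..u2}) = (\<Sum>r<N. mu r * indicator (J r) t)"
    if t0: "t \<noteq> 0" for t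
  proof (cases "t \<in> {0..v}")
    case False
    then have "indicator (J r) t = (0::real)" for r by (simp add: J_def indicator_def)
    then show ?thesis using False by simp
  next
    case True
    then have t: "0 < t" "t \<le> 1" using t0 v by auto
    obtain r0 where r0: "r0 < N" "Sc C n r0 < t" "t \<le> Sc C n (Suc r0)" using gi_exists[OF C n t] N_def by auto
    have g: "gi C n t = r0" using gi_eq[OF C n] r0 N_def by auto
    have ind: "indicator (J r) t = (if r = r0 then 1 else (0::real))" if "r < N" for r
    proof (cases "t \<in> J r")
      case True
      then have "gi C n t = r" using gi_eq[OF C n] that N_def by (auto simp: J_def)
      then show ?thesis using g True by simp
    next
      case False
      then have "r \<noteq> r0" using r0 \<open>t \<in> {0..v}\<close> by (auto simp: J_def)
      then show ?thesis using False by simp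
    qed
    have "(\<Sum>r<N. mu r * indicator (J r) t) = (\<Sum>r<N. if r = r0 then mu r else 0)"
      by (intro sum.cong refl) (simp add: ind)
    also have "\<dots> = mu r0" using r0 by simp
    finally show ?thesis using True g by (simp add: KD_rect[OF n] mu_def)
  qed
  have "DD C n u1 u2 v = integral\<^sup>L lborel (\<lambda>t. indicator {0..v} t * measure (KD C n t) ({0..u1}\<times>{0..u2}))"
    unfolding DD_def set_lebesgue_integral_def by simp
  also have "\<dots> = integral\<^sup>L lborel (\<lambda>t. \<Sum>r<N. mu r * indicator (J r) t)"
  proof (rule Bochner_Integration.integral_cong_AE)
    show "(\<lambda>t. indicator {0..v} t * measure (KD C n t) ({0..u1}\<times>{0..u2})) \<in> borel_measurable lborel"
      using KD_meas[OF n, of C "{0..u1}\<times>{0..u2}"] by measurable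
    show "(\<lambda>t. \<Sum>r<N. mu r * indicator (J r) t) \<in> borel_measurable lborel" by measurable
    show "AE t in lborel. indicator {0..v} t * measure (KD C n t) ({0..u1}\<times>{0..u2}) = (\<Sum>r<N. mu r * indicator (J r) t)"
      using AE_lborel_singleton[of 0] by eventually_elim (rule pw)
  qed
  also have "\<dots> = (\<Sum>r<N. mu r * measure lborel (J r))"
  proof -
    have fin: "emeasure lborel (J r) < \<infinity>" for r
    proof -
      have "emeasure lborel (J r) \<le> emeasure lborel {0..v}" unfolding J_def by (intro emeasure_mono) auto
      then show ?thesis by (simp add: emeasure_lborel_Icc_eq le_less_trans)
    qed
    have ii: "integrable lborel (\<lambda>t. mu r * indicator (J r) t)" for r
      using integrable_indicator[of "J r" lborel "1::real", OF Jm fin] by simp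
    have "integral\<^sup>L lborel (\<lambda>t. \<Sum>r<N. mu r * indicator (J r) t) = (\<Sum>r<N. integral\<^sup>L lborel (\<lambda>t. mu r * indicator (J r) t))"
      by (rule Bochner_Integration.integral_sum) (use ii in auto)
    also have "\<dots> = (\<Sum>r<N. mu r * measure lborel (J r))"
      by (intro sum.cong refl) simp
    finally show ?thesis .
  qed
  also have "\<dots> = (\<Sum>r<N. mu r * (min v (Sc C n (Suc r)) - min v (Sc C n r)))"
  proof (intro sum.cong refl)
    fix r assume "r \<in> {..<N}"
    then have "0 \<le> Sc C n r" "Sc C n r \<le> Sc C n (Suc r)" using Sc_range[OF C n, of r] Sc_mono[OF C n, of r "Suc r"] N_def by auto
    then show "mu r * measure lborel (J r) = mu r * (min v (Sc C n (Suc r)) - min v (Sc C n r))"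
      unfolding J_def using meas_J v by simp
  qed
  finally show ?thesis unfolding mu_def N_def .
qed

lemma DD_kernel: "0 < n \<Longrightarrow> cond_kernel (DD C n) (KD C n)"
  unfolding cond_kernel_def using KD_prob KD_sets KD_sq KD_meas by (auto simp: DD_def)

lemma DD_v1:
  assumes C: "copula3 C" and n: "0 < n"
  shows "DD C n u1 u2 1 = (\<Sum>r<n*n*n. phi n (ci n r) u1 * phi n (cj n r) u2 * mw C n r)"
proof -
  have "min 1 (Sc C n (Suc r)) - min 1 (Sc C n r) = mw C n r" if "r < n*n*n" for r
    using Sc_range[OF C n, of r] Sc_range[OF C n, of "Suc r"] that by (simp add: Sc_Suc)
  moreover have v1: "(1::real) \<in> {0..1}" by simp
  ultimately show ?thesis unfolding DD_formula[OF C n v1] by (intro sum.cong refl) auto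
qed

lemma DD_copula3:
  assumes C: "copula3 C" and n: "0 < n"
  shows "copula3 (DD C n)"
  unfolding copula3_def
proof (intro conjI ballI impI)
  fix x y :: real assume x: "x \<in> {0..1}" and y: "y \<in> {0..1}"
  show "DD C n 0 x y = 0" unfolding DD_formula[OF C n y] by (simp add: phi_zero)
  show "DD C n x 0 y = 0" unfolding DD_formula[OF C n y] by (simp add: phi_zero)
  have "min 0 (Sc C n (Suc r)) - min 0 (Sc C n r) = 0" if "r < n*n*n" for r
    using Sc_range[OF C n, of r] Sc_range[OF C n, of "Suc r"] that by simp
  moreover have v0: "(0::real) \<in> {0..1}" by simp
  ultimately show "DD C n x y 0 = 0" unfolding DD_formula[OF C n v0] by simp
next
  fix x :: real assume x: "x \<in> {0..1}"
  show "DD C n x 1 1 = x" unfolding DD_v1[OF C n] using wsum1[OF C n x] by (simp add: phi_one cj_lt[OF n])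
  show "DD C n 1 x 1 = x" unfolding DD_v1[OF C n] using wsum2[OF C n x] by (simp add: phi_one ci_lt[OF n] mult.commute)
  have "DD C n 1 1 x = (\<Sum>r<n*n*n. min x (Sc C n (Suc r)) - min x (Sc C n r))"
    unfolding DD_formula[OF C n x] by (simp add: phi_one ci_lt[OF n] cj_lt[OF n])
  also have "\<dots> = min x (Sc C n (n*n*n)) - min x (Sc C n 0)" by (rule sum_lessThan_telescope)
  also have "\<dots> = x" using x Sc_N[OF C n] Sc_0[of C n] by simp
  finally show "DD C n 1 1 x = x" .
next
  fix a1 b1 a2 b2 a3 b3 :: real
  assume "a1\<in>{0..1}" "b1\<in>{0..1}" "a2\<in>{0..1}" "b2\<in>{0..1}" "a3\<in>{0..1}" "b3\<in>{0..1}" "a1 \<le> b1" "a2 \<le> b2" "a3 \<le> b3"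
  then show "0 \<le> DD C n b1 b2 b3 - DD C n a1 b2 b3 - DD C n b1 a2 b3 - DD C n b1 b2 a3 + DD C n a1 a2 b3 + DD C n a1 b2 a3 + DD C n b1 a2 a3 - DD C n a1 a2 a3"
    by (intro kernel_box[OF DD_kernel[OF n]])
qed

lemma DD_C3c:
  assumes C: "copula3 C" and n: "0 < n"
  shows "DD C n \<in> C3c"
proof -
  have "continuous_on UNIV (\<lambda>x. F13 (KD C n) x t) \<and> continuous_on UNIV (\<lambda>x. F23 (KD C n) x t)" for t
  proof -
    have e1: "(\<lambda>x. F13 (KD C n) x t) = phi n (ci n (gi C n t))"
      by (simp add: F13_def KD_rect[OF n] phi_one cj_lt[OF n] fun_eq_iff)
    have e2: "(\<lambda>x. F23 (KD C n) x t) = phi n (cj n (gi C n t))"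
      by (simp add: F23_def KD_rect[OF n] phi_one ci_lt[OF n] fun_eq_iff)
    show ?thesis unfolding e1 e2 using phi_cont by simp
  qed
  then show ?thesis unfolding C3c_def using DD_copula3[OF C n] DD_kernel[OF n] by auto
qed

lemma DD_grid:
  assumes C: "copula3 C" and n: "0 < n" and abc: "a \<le> n" "b \<le> n" "c \<le> n"
  shows "DD C n (real a / real n) (real b / real n) (real c / real n) = C (real a / real n) (real b / real n) (real c / real n)"
proof -
  have v: "real c / real n \<in> {0..1}" using frac01[OF n abc(3)] .
  have Sv: "Sc C n (c*(n*n)) = real c / real n" by (rule Sc_grid[OF C n abc(3)])
  have le: "c*(n*n) \<le> n*n*n" using abc by (simp add: NN[symmetric])
  have "min (real c / real n) (Sc C n (Suc r)) - min (real c / real n) (Sc C n r) = (if r < c*(n*n) then mw C n r else 0)"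
    if r: "r < n*n*n" for r
  proof (cases "r < c*(n*n)")
    case True
    then have "Sc C n (Suc r) \<le> Sc C n (c*(n*n))" using le by (intro Sc_mono[OF C n]) auto
    moreover have "Sc C n r \<le> Sc C n (Suc r)" using r by (intro Sc_mono[OF C n]) auto
    ultimately show ?thesis using True Sv by (simp add: Sc_Suc)
  next
    case False
    then have "Sc C n (c*(n*n)) \<le> Sc C n r" using r by (intro Sc_mono[OF C n]) auto
    moreover have "Sc C n r \<le> Sc C n (Suc r)" using r by (intro Sc_mono[OF C n]) auto
    ultimately show ?thesis using False Sv by simp
  qed
  then have "DD C n (real a / real n) (real b / real n) (real c / real n) =
     (\<Sum>r<n*n*n. phi n (ci n r) (real a / real n) * phi n (cj n r) (real b / real n) * (if r < c*(n*n) then mw C n r else 0))"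
    unfolding DD_formula[OF C n v] by (intro sum.cong refl) auto
  also have "\<dots> = gF C n a b c" by (rule grid_sum[OF C n abc])
  finally show ?thesis by (simp add: gF_def)
qed

lemma grid_pt:
  assumes n: "0 < n" and x: "x \<in> {0..1}"
  obtains a where "a \<le> n" "\<bar>x - real a / real n\<bar> \<le> 1 / real n"
proof -
  define a where "a = nat \<lfloor>x * real n\<rfloor>"
  have f0: "0 \<le> \<lfloor>x * real n\<rfloor>" using x by simp
  have ra: "real a = of_int \<lfloor>x * real n\<rfloor>" unfolding a_def using f0 by simp
  have "of_int \<lfloor>x * real n\<rfloor> \<le> x * real n" by simp
  moreover have "x * real n < of_int \<lfloor>x * real n\<rfloor> + 1" by linarith
  ultimately have b: "real a \<le> x * real n" "x * real n < real a + 1" using ra by auto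
  have "x * real n \<le> real n" using x n by (simp add: mult_le_cancel_right1)
  then have an: "a \<le> n" using b by linarith
  have "\<bar>x * real n - real a\<bar> \<le> 1" using b by linarith
  moreover have "(x - real a / real n) * real n = x * real n - real a" using n by (simp add: left_diff_distrib)
  ultimately have "\<bar>x - real a / real n\<bar> * real n \<le> 1" by (metis abs_mult abs_of_nat)
  then have "\<bar>x - real a / real n\<bar> \<le> 1 / real n" using n by (simp add: le_divide_eq)
  then show ?thesis using an that by blast
qed

lemma DD_close:
  assumes C: "copula3 C" and n: "0 < n" and u: "u1 \<in> {0..1}" "u2 \<in> {0..1}" "v \<in> {0..1}"
  shows "\<bar>C u1 u2 v - DD C n u1 u2 v\<bar> \<le> 6 / real n"
proof -
  obtain a where a: "a \<le> n" "\<bar>u1 - real a / real n\<bar> \<le> 1 / real n" using grid_pt[OF n u(1)] .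
  obtain b where b: "b \<le> n" "\<bar>u2 - real b / real n\<bar> \<le> 1 / real n" using grid_pt[OF n u(2)] .
  obtain c where c: "c \<le> n" "\<bar>v - real c / real n\<bar> \<le> 1 / real n" using grid_pt[OF n u(3)] .
  have g: "real a / real n \<in> {0..1}" "real b / real n \<in> {0..1}" "real c / real n \<in> {0..1}"
    using frac01[OF n] a b c by auto
  have D: "copula3 (DD C n)" by (rule DD_copula3[OF C n])
  have "\<bar>C u1 u2 v - C (real a / real n) (real b / real n) (real c / real n)\<bar> \<le> 3 / real n"
    using cop3_lip[OF C u g] a b c by simp
  moreover have "\<bar>DD C n u1 u2 v - DD C n (real a / real n) (real b / real n) (real c / real n)\<bar> \<le> 3 / real n"
    using cop3_lip[OF D u g] a b c by simp
  moreover note DD_grid[OF C n a(1) b(1) c(1)]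
  ultimately show ?thesis by linarith
qed

lemma psi_DD:
  assumes C: "copula3 C" and n: "0 < n" and u: "u1 \<in> {0..1}" "u2 \<in> {0..1}" "v \<in> {0..1}"
  shows "psi (DD C n) u1 u2 v = DD C n u1 u2 v"
proof -
  define D where "D = DD C n"
  have DC: "D \<in> C3c" unfolding D_def by (rule DD_C3c[OF C n])
  define K where "K = (SOME K. cond_kernel D K)"
  have K: "cond_kernel D K" unfolding K_def by (rule kernel_exists[OF DC])
  have KD: "cond_kernel D (KD C n)" unfolding D_def by (rule DD_kernel[OF n])
  have ae: "AE t in lborel. t \<in> {0..1} \<longrightarrow> (\<forall>s1\<in>{0..1}. \<forall>s2\<in>{0..1}. cond_copula K t s1 s2 = s1 * s2) \<and>
      (\<forall>x1\<in>{0..1}. \<forall>x2\<in>{0..1}. F13 K x1 t * F23 K x2 t = measure (K t) ({0..x1}\<times>{0..x2}))"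
    using kernel_ae_all[OF K KD]
  proof eventually_elim
    case (elim t)
    show ?case
    proof
      assume t: "t \<in> {0..1}"
      define i where "i = ci n (gi C n t)"
      define j where "j = cj n (gi C n t)"
      have ij: "i < n" "j < n" unfolding i_def j_def using ci_lt[OF n] cj_lt[OF n] by auto
      have R: "measure (K t) ({0..x1}\<times>{0..x2}) = phi n i x1 * phi n j x2" if "x1 \<in> {0..1}" "x2 \<in> {0..1}" for x1 x2
        using elim t that by (simp add: KD_rect[OF n] i_def j_def)
      have F1: "F13 K x t = phi n i x" if "x \<in> {0..1}" for x using R[OF that, of 1] by (simp add: F13_def phi_one ij)
      have F2: "F23 K x t = phi n j x" if "x \<in> {0..1}" for x using R[OF _ that, of 1] by (simp add: F23_def phi_one ij)
      have P: "\<forall>x1\<in>{0..1}. \<forall>x2\<in>{0..1}. F13 K x1 t * F23 K x2 t = measure (K t) ({0..x1}\<times>{0..x2})"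
        using R F1 F2 by simp
      have ex: "\<exists>A. copula2 A \<and> (\<forall>x1\<in>{0..1}. \<forall>x2\<in>{0..1}. measure (K t) ({0..x1}\<times>{0..x2}) = A (F13 K x1 t) (F23 K x2 t))"
        using copula2_prod P by auto
      have A: "\<forall>x1\<in>{0..1}. \<forall>x2\<in>{0..1}. measure (K t) ({0..x1}\<times>{0..x2}) = cond_copula K t (F13 K x1 t) (F23 K x2 t)"
        using someI_ex[OF ex] unfolding cond_copula_def by blast
      have "cond_copula K t s1 s2 = s1 * s2" if s: "s1 \<in> {0..1}" "s2 \<in> {0..1}" for s1 s2
      proof -
        define x1 where "x1 = (real i + s1) / real n"
        define x2 where "x2 = (real j + s2) / real n"
        have x: "x1 \<in> {0..1}" "x2 \<in> {0..1}" unfolding x1_def x2_def using s ij n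
          by (auto simp: divide_le_eq)
        have "F13 K x1 t = s1" using F1[OF x(1)] phi_inv[OF n s(1)] x1_def by simp
        moreover have "F23 K x2 t = s2" using F2[OF x(2)] phi_inv[OF n s(2)] x2_def by simp
        ultimately show ?thesis using A x P by metis
      qed
      then show "(\<forall>s1\<in>{0..1}. \<forall>s2\<in>{0..1}. cond_copula K t s1 s2 = s1 * s2) \<and>
          (\<forall>x1\<in>{0..1}. \<forall>x2\<in>{0..1}. F13 K x1 t * F23 K x2 t = measure (K t) ({0..x1}\<times>{0..x2}))"
        using P by blast
    qed
  qed
  have pc: "partial_copula K s1 s2 = s1 * s2" if s: "s1 \<in> {0..1}" "s2 \<in> {0..1}" for s1 s2
  proof -
    have ae2: "AE (t::real) in lebesgue. indicator {0..1} t *\<^sub>R (s1 * s2) = indicator {0..1} t *\<^sub>R cond_copula K t s1 s2"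
      using AE_completion[OF ae] by eventually_elim (use s in \<open>auto simp: indicator_def\<close>)
    have m1: "(\<lambda>t::real. indicator {0..1} t *\<^sub>R (s1 * s2)) \<in> borel_measurable lebesgue" by (intro measurable_completion) measurable
    have m2: "(\<lambda>t::real. indicator {0..1} t *\<^sub>R cond_copula K t s1 s2) \<in> borel_measurable lebesgue"
      by (rule borel_measurable_AE[OF m1 ae2])
    have ae3: "AE (t::real) in lebesgue. indicator {0..1} t *\<^sub>R cond_copula K t s1 s2 = indicator {0..1} t *\<^sub>R (s1 * s2)"
      using ae2 by (auto elim!: eventually_mono)
    have "integral\<^sup>L lebesgue (\<lambda>t::real. indicator {0..1} t *\<^sub>R cond_copula K t s1 s2) = integral\<^sup>L lebesgue (\<lambda>t::real. indicator {0..1} t *\<^sub>R (s1 * s2))"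
      using m2 m1 ae3 by (rule Bochner_Integration.integral_cong_AE)
    then have "partial_copula K s1 s2 = integral\<^sup>L lebesgue (\<lambda>t::real. indicator {0..1} t *\<^sub>R (s1 * s2))"
      unfolding partial_copula_def set_lebesgue_integral_def .
    also have "\<dots> = s1 * s2"
      using set_integral_const[of "{0..1}" lebesgue "s1 * s2"] by (simp add: set_lebesgue_integral_def emeasure_lborel_Icc_eq)
    finally show ?thesis .
  qed
  have Fb: "F13 K x t \<in> {0..1}" "F23 K x t \<in> {0..1}" for x t using ck_bnd[OF K] by (auto simp: F13_def F23_def)
  have "psi D u1 u2 v = (LINT t:{0..v}|lebesgue. F13 K u1 t * F23 K u2 t)"
    unfolding psi_def K_def[symmetric] Let_def using pc Fb by simp
  also have "\<dots> = (LINT t:{0..v}|lebesgue. measure (K t) ({0..u1}\<times>{0..u2}))"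
    unfolding set_lebesgue_integral_def
  proof (rule Bochner_Integration.integral_cong_AE)
    show "(\<lambda>t. indicator {0..v} t *\<^sub>R (F13 K u1 t * F23 K u2 t)) \<in> borel_measurable lebesgue"
      unfolding F13_def F23_def using K by (intro measurable_completion) measurable
    show "(\<lambda>t. indicator {0..v} t *\<^sub>R measure (K t) ({0..u1}\<times>{0..u2})) \<in> borel_measurable lebesgue"
      using K by (intro measurable_completion) measurable
    show "AE t in lebesgue. indicator {0..v} t *\<^sub>R (F13 K u1 t * F23 K u2 t) = indicator {0..v} t *\<^sub>R measure (K t) ({0..u1}\<times>{0..u2})"
      using AE_completion[OF ae] by eventually_elim (use u in \<open>auto simp: indicator_def\<close>)
  qed
  also have "\<dots> = (LINT t:{0..v}|lborel. measure (K t) ({0..u1}\<times>{0..u2}))"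
    unfolding set_lebesgue_integral_def using K by (intro integral_completion) measurable
  also have "\<dots> = D u1 u2 v" using ck_val[OF K u] by simp
  finally show ?thesis unfolding D_def .
qed

lemma dinf_le:
  assumes "\<And>u1 u2 v. u1 \<in> {0..1} \<Longrightarrow> u2 \<in> {0..1} \<Longrightarrow> v \<in> {0..1} \<Longrightarrow> \<bar>C1 u1 u2 v - C2 u1 u2 v\<bar> \<le> B"
  shows "dinf C1 C2 \<le> B"
  unfolding dinf_def by (rule cSUP_least) (use assms in auto)

lemma dinf_ge:
  assumes "\<And>u1 u2 v. u1 \<in> {0..1} \<Longrightarrow> u2 \<in> {0..1} \<Longrightarrow> v \<in> {0..1} \<Longrightarrow> \<bar>C1 u1 u2 v - C2 u1 u2 v\<bar> \<le> B"
    and u: "u1 \<in> {0..1}" "u2 \<in> {0..1}" "v \<in> {0..1}"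
  shows "\<bar>C1 u1 u2 v - C2 u1 u2 v\<bar> \<le> dinf C1 C2"
proof -
  have "bdd_above ((\<lambda>x. \<bar>C1 (fst x) (fst (snd x)) (snd (snd x)) - C2 (fst x) (fst (snd x)) (snd (snd x))\<bar>) ` ({0..1} \<times> {0..1} \<times> {0..1}))"
    using assms(1) by (intro bdd_aboveI[where M=B]) auto
  from cSUP_upper[OF _ this, of "(u1, u2, v)"] show ?thesis unfolding dinf_def using u by simp
qed

theorem theorem6p1:
  assumes "C \<in> C3c"
    and "dinf C (psi C) \<noteq> 0"
  shows "\<not> (\<forall>e>0. \<exists>d>0. \<forall>D\<in>C3c. dinf C D < d \<longrightarrow> dinf (psi C) (psi D) < e)"
proof
  assume H: "\<forall>e>0. \<exists>d>0. \<forall>D\<in>C3c. dinf C D < d \<longrightarrow> dinf (psi C) (psi D) < e"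
  have CC: "C \<in> C3c" by fact
  have C: "copula3 C" using CC unfolding C3c_def by blast
  have bC: "\<bar>C u1 u2 v - psi C u1 u2 v\<bar> \<le> 1" if "u1 \<in> {0..1}" "u2 \<in> {0..1}" "v \<in> {0..1}" for u1 u2 v
    using cop3_bnd[OF C that] psi_bnd[OF CC that] by auto
  define eps where "eps = dinf C (psi C)"
  have "0 \<le> \<bar>C 0 0 0 - psi C 0 0 0\<bar>" by simp
  also have "\<dots> \<le> eps" unfolding eps_def by (rule dinf_ge[OF bC]) auto
  finally have eps: "0 < eps" using assms(2) eps_def by auto
  obtain d where d: "d > 0" and Hd: "\<forall>D\<in>C3c. dinf C D < d \<longrightarrow> dinf (psi C) (psi D) < eps / 2"
    using H eps by (metis half_gt_zero)
  obtain n :: nat where nbig: "real n > max (12 / eps) (6 / d)" using reals_Archimedean2 by blast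
  have n: "0 < n" using nbig eps d
    by (metis less_max_iff_disj not_gr_zero of_nat_0 divide_pos_pos zero_less_numeral less_asym)
  have nd: "6 / real n < d" using nbig d n by (simp add: field_simps)
  have ne: "6 / real n < eps / 2" using nbig eps n by (simp add: field_simps)
  define D where "D = DD C n"
  have DC: "D \<in> C3c" unfolding D_def by (rule DD_C3c[OF C n])
  have close: "\<bar>C u1 u2 v - D u1 u2 v\<bar> \<le> 6 / real n" if "u1 \<in> {0..1}" "u2 \<in> {0..1}" "v \<in> {0..1}" for u1 u2 v
    unfolding D_def by (rule DD_close[OF C n that])
  have "dinf C D \<le> 6 / real n" by (rule dinf_le[OF close])
  then have "dinf (psi C) (psi D) < eps / 2" using Hd DC nd by auto
  moreover have "\<bar>C u1 u2 v - psi C u1 u2 v\<bar> \<le> 6 / real n + dinf (psi C) (psi D)"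
    if u: "u1 \<in> {0..1}" "u2 \<in> {0..1}" "v \<in> {0..1}" for u1 u2 v
  proof -
    have pD: "psi D x1 x2 x3 = D x1 x2 x3" if "x1 \<in> {0..1}" "x2 \<in> {0..1}" "x3 \<in> {0..1}" for x1 x2 x3
      unfolding D_def by (rule psi_DD[OF C n that])
    have bD: "\<bar>psi C x1 x2 x3 - psi D x1 x2 x3\<bar> \<le> 1" if "x1 \<in> {0..1}" "x2 \<in> {0..1}" "x3 \<in> {0..1}" for x1 x2 x3
      using psi_bnd[OF CC that] cop3_bnd[OF DD_copula3[OF C n] that] pD[OF that] unfolding D_def by auto
    have "\<bar>psi C u1 u2 v - psi D u1 u2 v\<bar> \<le> dinf (psi C) (psi D)" by (rule dinf_ge[OF bD u])
    then show ?thesis using close[OF u] pD[OF u] by linarith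
  qed
  then have "eps \<le> 6 / real n + dinf (psi C) (psi D)" unfolding eps_def by (rule dinf_le)
  ultimately show False using ne by linarith
qed


end
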